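(* For every $n\ge1$, the generating function of arrowed monotone triangles with bottom row $(1,2,\dots,n)$ equals $$\prod_{i=1}^nX_i^{n}\,\frac{\det_{1\le i,j\le n}\left((uX_i+w)^j-(-vX_i^{-1})^j\right)}{\prod_{1\le i<j\le n}(X_j-X_i)}=\prod_{i=1}^nX_i^{n}\,\frac{\sum_{\sigma\in S_n}\operatorname{sgn}(\sigma)\prod_{1\le p\le q\le n}\left(uX_{\sigma(q)}+vX_{\sigma(p)}^{-1}+w\right)}{\prod_{1\le i<j\le n}(X_j-X_i)}.$$
   Context: A monotone triangle with $n$ rows is an array $(m_{i,j})_{1\le j\le i\le n}$ of integers with $m_{i+1,j}\le m_{i,j}\le m_{i+1,j+1}$, $m_{i,j}<m_{i,j+1}$; row $n$ is the bottom row; northwest/northeast-neighbours of $m_{i,j}$ are $m_{i-1,j-1}$, $m_{i-1,j}$. An arrowed monotone triangle decorates each entry with one of $\nwarrow,\nearrow,\nwarrow\!\nearrow$ such that an entry equal to its northwest-neighbour carries $\nearrow$ and an entry equal to its northeast-neighbour carries $\nwarrow$. Its weight is $u^{\#\nearrow}v^{\#\nwarrow}w^{\#\nwarrow\nearrow}\prod_{i=1}^nX_i^{(\text{sum of row }i)-(\text{sum of row }i-1)+(\#\nearrow\text{ in row }i)-(\#\nwarrow\text{ in row }i)}$ (sum of row $0$ is $0$). *)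

theory Defs
  imports Main "HOL-Combinatorics.Permutations" "Jordan_Normal_Form.Determinant"
begin

text \<open>Decorations of entries: NW = north-west arrow, NE = north-east arrow,
  NWNE = both arrows.\<close>
datatype arrow = NW | NE | NWNE

text \<open>A (decorated) triangle is a pair (m, d) of functions on index pairs (i, j),
  1 <= j <= i <= n; outside this range they take the default values 0 / NW so
  that the set of triangles is a set of genuinely distinct objects.\<close>

definition in_tri :: "nat \<Rightarrow> nat \<Rightarrow> nat \<Rightarrow> bool" where
  "in_tri n i j \<longleftrightarrow> 1 \<le> j \<and> j \<le> i \<and> i \<le> n"

definition monotone_triangle :: "nat \<Rightarrow> (nat \<Rightarrow> nat \<Rightarrow> int) \<Rightarrow> bool" where
  "monotone_triangle n m \<longleftrightarrow>
     (\<forall>i j. 1 \<le> j \<and> j \<le> i \<and> i < n \<longrightarrow> m (i+1) j \<le> m i j \<and> m i j \<le> m (i+1) (j+1)) \<and>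
     (\<forall>i j. 1 \<le> j \<and> j < i \<and> i \<le> n \<longrightarrow> m i j < m i (j+1))"

definition arrowed_MT :: "nat \<Rightarrow> ((nat \<Rightarrow> nat \<Rightarrow> int) \<times> (nat \<Rightarrow> nat \<Rightarrow> arrow)) set" where
  "arrowed_MT n = {(m, d).
     (\<forall>i j. \<not> in_tri n i j \<longrightarrow> m i j = 0 \<and> d i j = NW) \<and>
     monotone_triangle n m \<and>
     (\<forall>j. 1 \<le> j \<and> j \<le> n \<longrightarrow> m n j = int j) \<and>
     \<comment> \<open>equal to north-west neighbour m(i-1,j-1) implies NE arrow\<close>
     (\<forall>i j. in_tri n i j \<and> 2 \<le> j \<and> m i j = m (i-1) (j-1) \<longrightarrow> d i j = NE) \<and>
     \<comment> \<open>equal to north-east neighbour m(i-1,j) implies NW arrow\<close>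
     (\<forall>i j. in_tri n i j \<and> j < i \<and> m i j = m (i-1) j \<longrightarrow> d i j = NW)}"

definition row_sum :: "(nat \<Rightarrow> nat \<Rightarrow> int) \<Rightarrow> nat \<Rightarrow> int" where
  "row_sum m i = (\<Sum>j=1..i. m i j)"

definition row_count :: "(nat \<Rightarrow> nat \<Rightarrow> arrow) \<Rightarrow> nat \<Rightarrow> arrow \<Rightarrow> nat" where
  "row_count d i a = card {j \<in> {1..i}. d i j = a}"

definition total_count :: "nat \<Rightarrow> (nat \<Rightarrow> nat \<Rightarrow> arrow) \<Rightarrow> arrow \<Rightarrow> nat" where
  "total_count n d a = (\<Sum>i=1..n. row_count d i a)"

definition amt_weight :: "nat \<Rightarrow> 'a::field \<Rightarrow> 'a \<Rightarrow> 'a \<Rightarrow> (nat \<Rightarrow> 'a)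
    \<Rightarrow> (nat \<Rightarrow> nat \<Rightarrow> int) \<times> (nat \<Rightarrow> nat \<Rightarrow> arrow) \<Rightarrow> 'a" where
  "amt_weight n u v w X t = (case t of (m, d) \<Rightarrow>
     u ^ total_count n d NE * v ^ total_count n d NW * w ^ total_count n d NWNE *
     (\<Prod>i=1..n. X i powi (row_sum m i - row_sum m (i - 1)
                          + int (row_count d i NE) - int (row_count d i NW))))"

definition amt_gf :: "nat \<Rightarrow> 'a::field \<Rightarrow> 'a \<Rightarrow> 'a \<Rightarrow> (nat \<Rightarrow> 'a) \<Rightarrow> 'a" where
  "amt_gf n u v w X = (\<Sum>t\<in>arrowed_MT n. amt_weight n u v w X t)"

end

theory Submission
  imports Defs "HOL-Computational_Algebra.Polynomial" "HOL-Library.FuncSet"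
begin

lemma transpose_comp_invol: "Transposition.transpose a b \<circ> Transposition.transpose a b = id"
  by (auto simp: fun_eq_iff)

lemma asym_transp_zero:
  fixes f :: "(nat \<Rightarrow> nat) \<Rightarrow> 'a::comm_ring_1"
  assumes fin: "finite S" and ab: "a \<in> S" "b \<in> S" "a \<noteq> b"
    and sym: "\<And>\<sigma>. \<sigma> permutes S \<Longrightarrow> f (\<sigma> \<circ> Transposition.transpose a b) = f \<sigma>"
  shows "(\<Sum>\<sigma> | \<sigma> permutes S. of_int (sign \<sigma>) * f \<sigma>) = 0"
proof -
  define t where "t = Transposition.transpose a b"
  define P where "P = {\<sigma>. \<sigma> permutes S}"
  define E where "E = {\<sigma>\<in>P. evenperm \<sigma>}"
  define Od where "Od = {\<sigma>\<in>P. \<not> evenperm \<sigma>}"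
  have finP: "finite P" unfolding P_def using finite_permutations[OF fin] by simp
  have tP: "t permutes S" unfolding t_def using ab permutes_swap_id by metis
  have tperm: "permutation t" unfolding t_def by (rule permutation_swap_id)
  have todd: "\<not> evenperm t" unfolding t_def using ab by (simp add: evenperm_swap)
  have permP: "\<And>\<sigma>. \<sigma> \<in> P \<Longrightarrow> permutation \<sigma>"
    unfolding P_def using fin permutes_imp_permutation by blast
  have ev: "\<And>\<sigma>. \<sigma> \<in> P \<Longrightarrow> evenperm (\<sigma> \<circ> t) = (\<not> evenperm \<sigma>)"
    using evenperm_comp[OF permP tperm] todd by auto
  have cP: "\<And>\<sigma>. \<sigma> \<in> P \<Longrightarrow> \<sigma> \<circ> t \<in> P"
    unfolding P_def using tP permutes_compose by blast
  have tt: "\<And>\<sigma>. \<sigma> \<circ> t \<circ> t = \<sigma>"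
    unfolding t_def by (simp add: comp_assoc transpose_comp_invol)
  have bij: "bij_betw (\<lambda>\<sigma>. \<sigma> \<circ> t) E Od"
    apply (rule bij_betw_byWitness[where f'="\<lambda>\<sigma>. \<sigma> \<circ> t"])
    using ev cP tt unfolding E_def Od_def by auto
  have PEO: "P = E \<union> Od" "E \<inter> Od = {}" unfolding E_def Od_def by auto
  have finE: "finite E" "finite Od" using finP PEO by auto
  have "(\<Sum>\<sigma>\<in>P. of_int (sign \<sigma>) * f \<sigma>) = (\<Sum>\<sigma>\<in>E. of_int (sign \<sigma>) * f \<sigma>) + (\<Sum>\<sigma>\<in>Od. of_int (sign \<sigma>) * f \<sigma>)"
    using PEO finE by (simp add: sum.union_disjoint)
  also have "(\<Sum>\<sigma>\<in>Od. of_int (sign \<sigma>) * f \<sigma>) = (\<Sum>\<sigma>\<in>E. of_int (sign (\<sigma> \<circ> t)) * f (\<sigma> \<circ> t))"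
    using sum.reindex_bij_betw[OF bij, symmetric] by simp
  also have "\<dots> = (\<Sum>\<sigma>\<in>E. - (of_int (sign \<sigma>) * f \<sigma>))"
    apply (rule sum.cong, simp)
    subgoal for \<sigma> using ev[of \<sigma>] sym[of \<sigma>] unfolding E_def P_def t_def sign_def by auto
    done
  finally show ?thesis unfolding P_def by (simp add: sum_negf)
qed


definition phi :: "(nat \<Rightarrow> 'a::comm_ring_1) \<Rightarrow> (nat \<Rightarrow> 'a) \<Rightarrow> nat \<Rightarrow> nat \<Rightarrow> 'a" where
  "phi a b q i = a i ^ q - (- b i) ^ q"

definition Pf :: "(nat \<Rightarrow> 'a::comm_ring_1) \<Rightarrow> (nat \<Rightarrow> 'a) \<Rightarrow> nat \<Rightarrow> (nat \<Rightarrow> nat) \<Rightarrow> 'a" where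
  "Pf a b q \<sigma> = (\<Prod>p=1..q. a (\<sigma> q) + b (\<sigma> p))"

definition pp :: "(nat \<Rightarrow> 'a::comm_ring_1) \<Rightarrow> nat set \<Rightarrow> 'a poly" where
  "pp b S = (\<Prod>i\<in>S. [:b i, 1:])"

lemma pp_expand:
  fixes a b :: "nat \<Rightarrow> 'a::field"
  assumes fin: "finite S" and c: "c \<in> S"
  shows "(\<Prod>i\<in>S. a c + b i) = phi a b (card S) c + (\<Sum>m=1..<card S. coeff (pp b S) m * phi a b m c)"
proof -
  define N where "N = card S"
  have N1: "N \<ge> 1" using fin c unfolding N_def by (metis One_nat_def Suc_leI card_gt_0_iff empty_iff)
  have polyp: "\<And>y. poly (pp b S) y = (\<Prod>i\<in>S. y + b i)"
    unfolding pp_def poly_prod by (simp add: add.commute)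
  have nz: "\<And>i. [:b i, 1:] \<noteq> 0" by simp
  have deg: "degree (pp b S) = N"
    unfolding pp_def N_def by (subst degree_prod_sum_eq) (auto)
  have lc: "coeff (pp b S) N = 1"
    using lead_coeff_prod[of "\<lambda>i. [:b i, 1:]" S] deg unfolding pp_def by simp
  have alt: "\<And>y. poly (pp b S) y = (\<Sum>m\<le>N. coeff (pp b S) m * y ^ m)"
    using poly_altdef deg by metis
  have z: "poly (pp b S) (- b c) = 0"
    unfolding polyp using fin c by (auto simp: prod_zero_iff)
  have "(\<Prod>i\<in>S. a c + b i) = poly (pp b S) (a c) - poly (pp b S) (- b c)"
    using z polyp by simp
  also have "\<dots> = (\<Sum>m\<le>N. coeff (pp b S) m * phi a b m c)"
    unfolding alt phi_def by (simp add: sum_subtractf[symmetric] right_diff_distrib)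
  also have "{..N} = insert N (insert 0 {1..<N})" using N1 by auto
  also have "(\<Sum>m\<in>insert N (insert 0 {1..<N}). coeff (pp b S) m * phi a b m c)
     = phi a b N c + (\<Sum>m=1..<N. coeff (pp b S) m * phi a b m c)"
    using N1 lc by (simp add: phi_def)
  finally show ?thesis unfolding N_def .
qed


definition Tr :: "(nat \<Rightarrow> 'a::comm_ring_1) \<Rightarrow> (nat \<Rightarrow> 'a) \<Rightarrow> nat \<Rightarrow> nat \<Rightarrow> 'a" where
  "Tr a b n r = (\<Sum>\<sigma> | \<sigma> permutes {1..n}. of_int (sign \<sigma>) *
      ((\<Prod>q=1..r. phi a b q (\<sigma> q)) * (\<Prod>q=Suc r..n. Pf a b q \<sigma>)))"

lemma Pf_image:
  assumes "\<sigma> permutes {1..n}" "q \<le> n"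
  shows "Pf a b q \<sigma> = (\<Prod>i\<in>\<sigma> ` {1..q}. a (\<sigma> q) + b i)"
proof -
  have "inj_on \<sigma> {1..q}" using assms permutes_inj inj_on_subset by blast
  then show ?thesis unfolding Pf_def by (simp add: prod.reindex)
qed

lemma Tr_step:
  fixes a b :: "nat \<Rightarrow> 'a::field"
  assumes rn: "r < n"
  shows "Tr a b n r = Tr a b n (Suc r)"
proof -
  define A where "A \<sigma> = (\<Prod>q=1..r. phi a b q (\<sigma> q))" for \<sigma>
  define B where "B \<sigma> = (\<Prod>q=Suc (Suc r)..n. Pf a b q \<sigma>)" for \<sigma>
  define C where "C m \<sigma> = coeff (pp b (\<sigma> ` {1..Suc r})) m" for m \<sigma>
  define P where "P = {\<sigma>. \<sigma> permutes {1..n}}"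
  have exp: "Pf a b (Suc r) \<sigma> = phi a b (Suc r) (\<sigma> (Suc r)) + (\<Sum>m=1..<Suc r. C m \<sigma> * phi a b m (\<sigma> (Suc r)))"
    if "\<sigma> \<in> P" for \<sigma>
  proof -
    have sp: "\<sigma> permutes {1..n}" using that P_def by auto
    have inj: "inj_on \<sigma> {1..Suc r}" using sp permutes_inj inj_on_subset by blast
    have card: "card (\<sigma> ` {1..Suc r}) = Suc r" using card_image[OF inj] by simp
    have "Pf a b (Suc r) \<sigma> = (\<Prod>i\<in>\<sigma> ` {1..Suc r}. a (\<sigma> (Suc r)) + b i)"
      using Pf_image[OF sp, of "Suc r"] rn by simp
    also have "\<dots> = phi a b (Suc r) (\<sigma> (Suc r)) + (\<Sum>m=1..<Suc r. C m \<sigma> * phi a b m (\<sigma> (Suc r)))"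
      using pp_expand[of "\<sigma> ` {1..Suc r}" "\<sigma> (Suc r)" a b] card unfolding C_def by auto
    finally show ?thesis .
  qed
  have split1: "(\<Prod>q=Suc r..n. Pf a b q \<sigma>) = Pf a b (Suc r) \<sigma> * B \<sigma>" for \<sigma>
    unfolding B_def using rn by (simp add: prod.atLeast_Suc_atMost)
  have split2: "(\<Prod>q=1..Suc r. phi a b q (\<sigma> q)) = A \<sigma> * phi a b (Suc r) (\<sigma> (Suc r))" for \<sigma>
    unfolding A_def by (simp add: prod.nat_ivl_Suc' mult.commute)
  have zero: "(\<Sum>\<sigma>\<in>P. of_int (sign \<sigma>) * (A \<sigma> * (C m \<sigma> * phi a b m (\<sigma> (Suc r))) * B \<sigma>)) = 0"
    if m: "m \<in> {1..<Suc r}" for m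
  proof -
    define t where "t = Transposition.transpose m (Suc r)"
    show ?thesis unfolding P_def
    proof (rule asym_transp_zero[where a=m and b="Suc r"])
      show "finite {1..n}" by simp
      show "m \<in> {1..n}" "Suc r \<in> {1..n}" "m \<noteq> Suc r" using m rn by auto
    next
      fix \<sigma> :: "nat \<Rightarrow> nat" assume sp: "\<sigma> permutes {1..n}"
      have tq: "\<And>q. q \<noteq> m \<Longrightarrow> q \<noteq> Suc r \<Longrightarrow> t q = q" unfolding t_def by simp
      have tm: "t m = Suc r" "t (Suc r) = m" unfolding t_def by auto
      have A1: "A (\<sigma> \<circ> t) * phi a b m ((\<sigma> \<circ> t) (Suc r)) = A \<sigma> * phi a b m (\<sigma> (Suc r))"
      proof -
        have fin: "finite {1..r}" and mm: "m \<in> {1..r}" using m by auto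
        have e1: "A (\<sigma> \<circ> t) = phi a b m (\<sigma> (Suc r)) * (\<Prod>q\<in>{1..r}-{m}. phi a b q (\<sigma> q))"
          unfolding A_def using prod.remove[OF fin mm, of "\<lambda>q. phi a b q ((\<sigma> \<circ> t) q)"] tm tq
          by (auto intro!: prod.cong)
        have e2: "A \<sigma> = phi a b m (\<sigma> m) * (\<Prod>q\<in>{1..r}-{m}. phi a b q (\<sigma> q))"
          unfolding A_def using prod.remove[OF fin mm] by simp
        show ?thesis using e1 e2 tm by (simp add: ac_simps)
      qed
      have tperm: "t permutes {1..Suc r}" unfolding t_def using m by (intro permutes_swap_id) auto
      have C1: "C m (\<sigma> \<circ> t) = C m \<sigma>"
        unfolding C_def image_comp[symmetric] permutes_image[OF tperm] ..
      have B1: "B (\<sigma> \<circ> t) = B \<sigma>"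
        unfolding B_def
      proof (rule prod.cong[OF refl])
        fix q assume q: "q \<in> {Suc (Suc r)..n}"
        have tp: "t permutes {1..q}" unfolding t_def using m q by (intro permutes_swap_id) auto
        have "Pf a b q (\<sigma> \<circ> t) = (\<Prod>p=1..q. a (\<sigma> q) + b (\<sigma> (t p)))"
          unfolding Pf_def using tq[of q] q m by auto
        also have "\<dots> = (\<Prod>p=1..q. a (\<sigma> q) + b (\<sigma> p))"
          using prod.permute[OF tp, of "\<lambda>p. a (\<sigma> q) + b (\<sigma> p)"] by (simp add: comp_def)
        finally show "Pf a b q (\<sigma> \<circ> t) = Pf a b q \<sigma>" unfolding Pf_def .
      qed
      show "A (\<sigma> \<circ> Transposition.transpose m (Suc r)) *
          (C m (\<sigma> \<circ> Transposition.transpose m (Suc r)) * phi a b m ((\<sigma> \<circ> Transposition.transpose m (Suc r)) (Suc r))) *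
          B (\<sigma> \<circ> Transposition.transpose m (Suc r)) =
          A \<sigma> * (C m \<sigma> * phi a b m (\<sigma> (Suc r))) * B \<sigma>"
        using A1 C1 B1 unfolding t_def[symmetric] by (metis (no_types, lifting) mult.assoc mult.left_commute)
    qed
  qed
  have "Tr a b n r = (\<Sum>\<sigma>\<in>P. of_int (sign \<sigma>) * (A \<sigma> * Pf a b (Suc r) \<sigma> * B \<sigma>))"
    unfolding Tr_def P_def A_def[symmetric] split1 by (simp add: mult.assoc)
  also have "\<dots> = (\<Sum>\<sigma>\<in>P. of_int (sign \<sigma>) * (A \<sigma> * phi a b (Suc r) (\<sigma> (Suc r)) * B \<sigma>)
       + (\<Sum>m=1..<Suc r. of_int (sign \<sigma>) * (A \<sigma> * (C m \<sigma> * phi a b m (\<sigma> (Suc r))) * B \<sigma>)))"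
    by (rule sum.cong[OF refl]) (simp add: exp algebra_simps sum_distrib_left sum_distrib_right)
  also have "\<dots> = (\<Sum>\<sigma>\<in>P. of_int (sign \<sigma>) * (A \<sigma> * phi a b (Suc r) (\<sigma> (Suc r)) * B \<sigma>))
       + (\<Sum>m=1..<Suc r. \<Sum>\<sigma>\<in>P. of_int (sign \<sigma>) * (A \<sigma> * (C m \<sigma> * phi a b m (\<sigma> (Suc r))) * B \<sigma>))"
    by (simp add: sum.distrib sum.swap[of _ P])
  also have "(\<Sum>m=1..<Suc r. \<Sum>\<sigma>\<in>P. of_int (sign \<sigma>) * (A \<sigma> * (C m \<sigma> * phi a b m (\<sigma> (Suc r))) * B \<sigma>)) = 0"
    using zero by simp
  also have "(\<Sum>\<sigma>\<in>P. of_int (sign \<sigma>) * (A \<sigma> * phi a b (Suc r) (\<sigma> (Suc r)) * B \<sigma>)) = Tr a b n (Suc r)"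
    unfolding Tr_def P_def split2 B_def by (simp add: mult.assoc)
  finally show ?thesis by simp
qed

lemma Tr_all:
  fixes a b :: "nat \<Rightarrow> 'a::field"
  shows "r \<le> n \<Longrightarrow> Tr a b n 0 = Tr a b n r"
  by (induction r) (auto simp: Tr_step)


lemma sum_perm_map:
  fixes F :: "(nat \<Rightarrow> nat) \<Rightarrow> 'a::comm_ring_1"
  assumes bij: "bij_betw f A B" and g: "\<And>x. x \<in> A \<Longrightarrow> g (f x) = x" and fin: "finite A"
  shows "(\<Sum>\<pi> | \<pi> permutes B. of_int (sign \<pi>) * F \<pi>) =
         (\<Sum>p | p permutes A. of_int (sign p) * F (map_permutation A f p))"
proof -
  have fg: "\<And>y. y \<in> B \<Longrightarrow> f (g y) = y" using bij g unfolding bij_betw_def by auto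
  have bijg: "bij_betw g B A"
    by (rule bij_betw_byWitness[where f'=f]) (use bij g fg in \<open>auto simp: bij_betw_def\<close>)
  have injf: "inj_on f A" using bij bij_betw_def by blast
  have hb: "bij_betw (map_permutation A f) {p. p permutes A} {\<pi>. \<pi> permutes B}"
  proof (rule bij_betw_byWitness[where f'="map_permutation B g"])
    show "\<forall>a\<in>{p. p permutes A}. map_permutation B g (map_permutation A f a) = a"
      using map_permutation_compose_inv[OF bij _ g] by auto
    show "\<forall>a'\<in>{\<pi>. \<pi> permutes B}. map_permutation A f (map_permutation B g a') = a'"
      using map_permutation_compose_inv[OF bijg _ fg] by auto
    show "map_permutation A f ` {p. p permutes A} \<subseteq> {\<pi>. \<pi> permutes B}"
      using map_permutation_permutes[OF bij] by auto
    show "map_permutation B g ` {\<pi>. \<pi> permutes B} \<subseteq> {p. p permutes A}"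
      using map_permutation_permutes[OF bijg] by auto
  qed
  show ?thesis
    using sum.reindex_bij_betw[OF hb, of "\<lambda>\<pi>. of_int (sign \<pi>) * F \<pi>", symmetric]
    by (auto intro!: sum.cong simp: sign_map_permutation[OF injf _ fin])
qed

lemma det_phi:
  fixes a b :: "nat \<Rightarrow> 'a::field"
  shows "det (mat n n (\<lambda>(i, j). phi a b (j+1) (i+1))) = Tr a b n n"
proof -
  define M where "M = mat n n (\<lambda>(i, j). phi a b (j+1) (i+1))"
  have "det M = det (transpose_mat M)" unfolding M_def by (rule det_transpose[symmetric]) (rule mat_carrier)
  also have "\<dots> = (\<Sum>p | p permutes {0..<n}. of_int (sign p) * (\<Prod>i=0..<n. phi a b (Suc i) (Suc (p i))))"
    unfolding det_def M_def by (auto intro!: sum.cong prod.cong simp: permutes_in_image)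
  also have "\<dots> = (\<Sum>\<pi> | \<pi> permutes {1..n}. of_int (sign \<pi>) * (\<Prod>q=1..n. phi a b q (\<pi> q)))"
  proof -
    have bij: "bij_betw Suc {0..<n} {1..n}"
      by (rule bij_betw_byWitness[where f'="\<lambda>x. x - 1"]) auto
    have e: "(\<Prod>q=1..n. phi a b q (map_permutation {0..<n} Suc p q)) = (\<Prod>i=0..<n. phi a b (Suc i) (Suc (p i)))"
      for p
    proof -
      have "(\<Prod>q=1..n. phi a b q (map_permutation {0..<n} Suc p q))
          = (\<Prod>i=0..<n. phi a b (Suc i) (map_permutation {0..<n} Suc p (Suc i)))"
        using prod.reindex_bij_betw[OF bij, of "\<lambda>q. phi a b q (map_permutation {0..<n} Suc p q)"] by simp
      also have "\<dots> = (\<Prod>i=0..<n. phi a b (Suc i) (Suc (p i)))"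
        by (rule prod.cong[OF refl]) (simp add: map_permutation_apply)
      finally show ?thesis .
    qed
    show ?thesis using sum_perm_map[OF bij, of "\<lambda>x. x - 1" "\<lambda>\<pi>. \<Prod>q=1..n. phi a b q (\<pi> q)"] e by simp
  qed
  also have "\<dots> = Tr a b n n" unfolding Tr_def by simp
  finally show ?thesis unfolding M_def .
qed

lemma sumform_det:
  fixes a b :: "nat \<Rightarrow> 'a::field"
  shows "(\<Sum>\<sigma> | \<sigma> permutes {1..n}. of_int (sign \<sigma>) * (\<Prod>q=1..n. \<Prod>p=1..q. a (\<sigma> q) + b (\<sigma> p)))
       = det (mat n n (\<lambda>(i, j). phi a b (j+1) (i+1)))"
  using Tr_all[of n n a b] unfolding det_phi by (simp add: Tr_def Pf_def)


definition sh :: "nat \<Rightarrow> nat \<Rightarrow> nat \<Rightarrow> nat" where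
  "sh m a j = (if j \<le> a then j else if j = Suc a then Suc m else if j \<le> Suc m then j - 1 else j)"

lemma sh_id: "sh m m = id"
  by (auto simp: sh_def fun_eq_iff)

lemma sh_rec: "a < m \<Longrightarrow> sh m a = sh m (Suc a) \<circ> Transposition.transpose (Suc a) (Suc (Suc a))"
  by (auto simp: sh_def fun_eq_iff Transposition.transpose_def)

lemma sh_props: "a \<le> m \<Longrightarrow> sh m a permutes {1..Suc m} \<and> sign (sh m a) = (-1) ^ (m - a)"
proof (induction a rule: inc_induct)
  case base
  then show ?case using permutes_id[of "{1..Suc m}"] by (simp add: sh_id id_def)
next
  case (step a)
  have t: "Transposition.transpose (Suc a) (Suc (Suc a)) permutes {1..Suc m}"
    using step by (intro permutes_swap_id) auto
  have p1: "sh m a permutes {1..Suc m}"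
    using sh_rec[OF step(2)] step(3) t permutes_compose by metis
  have "sign (sh m a) = sign (sh m (Suc a)) * sign (Transposition.transpose (Suc a) (Suc (Suc a)))"
    unfolding sh_rec[OF step(2)]
    by (rule sign_compose) (use step(3) in \<open>auto intro: permutes_imp_permutation permutation_swap_id\<close>)
  also have "\<dots> = (-1) ^ (m - a)"
  proof -
    have "m - a = Suc (m - Suc a)" using step(2) by arith
    then show ?thesis using step(2,3) by (simp add: sign_swap_id)
  qed
  finally show ?case using p1 by simp
qed

lemma sh_val: "a \<le> m \<Longrightarrow> j \<in> {1..Suc m} \<Longrightarrow> sh m a j = Suc m \<longleftrightarrow> j = Suc a"
  by (auto simp: sh_def)

lemma perm_insert_decomp:
  fixes f :: "(nat \<Rightarrow> nat) \<Rightarrow> 'a::comm_ring_1"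
  shows "(\<Sum>\<tau> | \<tau> permutes {1..Suc m}. of_int (sign \<tau>) * f \<tau>)
       = (\<Sum>a=0..m. \<Sum>\<pi> | \<pi> permutes {1..m}. (-1) ^ (m - a) * (of_int (sign \<pi>) * f (\<pi> \<circ> sh m a)))"
proof -
  define PN where "PN = {\<tau>. \<tau> permutes {1..Suc m}}"
  define Pm where "Pm = {\<pi>. \<pi> permutes {1..m}}"
  define D where "D = {0..m} \<times> Pm"
  define h :: "nat \<times> (nat \<Rightarrow> nat) \<Rightarrow> nat \<Rightarrow> nat" where "h = (\<lambda>(a, \<pi>). \<pi> \<circ> sh m a)"
  have finPm: "finite Pm" unfolding Pm_def using finite_permutations by blast
  have finPN: "finite PN" unfolding PN_def using finite_permutations by blast
  have hmem: "h x \<in> PN" if xD: "x \<in> D" for x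
  proof -
    obtain a \<pi> where x: "x = (a, \<pi>)" "a \<le> m" "\<pi> permutes {1..m}" using xD unfolding D_def Pm_def by (cases x) auto
    have "\<pi> permutes {1..Suc m}" using x(3) by (rule permutes_subset) auto
    then show ?thesis unfolding h_def x PN_def using sh_props[OF x(2)] permutes_compose by auto
  qed
  have hinj: "inj_on h D"
  proof (rule inj_onI)
    fix x y assume x: "x \<in> D" and y: "y \<in> D" and e: "h x = h y"
    obtain a \<pi> where xa: "x = (a, \<pi>)" "a \<le> m" "\<pi> permutes {1..m}" using x unfolding D_def Pm_def by (cases x) auto
    obtain b \<rho> where yb: "y = (b, \<rho>)" "b \<le> m" "\<rho> permutes {1..m}" using y unfolding D_def Pm_def by (cases y) auto
    have e': "\<pi> \<circ> sh m a = \<rho> \<circ> sh m b" using e unfolding h_def xa yb by simp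
    have ab: "a = b"
    proof (rule ccontr)
      assume ne: "a \<noteq> b"
      have "(\<pi> \<circ> sh m a) (Suc a) = Suc m"
        using xa permutes_not_in[OF xa(3)] by (simp add: sh_def)
      moreover have "sh m b (Suc a) \<in> {1..m}"
      proof -
        have spb: "sh m b permutes {1..Suc m}" using sh_props[OF yb(2)] by simp
        have "Suc a \<in> {1..Suc m}" using xa(2) by simp
        then have i: "sh m b (Suc a) \<in> {1..Suc m}" using permutes_in_image[OF spb] by blast
        have "sh m b (Suc a) \<noteq> Suc m" using sh_val[OF yb(2), of "Suc a"] xa(2) ne by simp
        then show ?thesis using i by auto
      qed
      then have "\<rho> (sh m b (Suc a)) \<in> {1..m}" using permutes_in_image[OF yb(3)] by blast
      ultimately show False using fun_cong[OF e', of "Suc a"] by auto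
    qed
    have sp: "sh m a permutes {1..Suc m}" using sh_props[OF xa(2)] by simp
    have "\<pi> = \<pi> \<circ> sh m a \<circ> inv_into UNIV (sh m a)" "\<rho> = \<rho> \<circ> sh m a \<circ> inv_into UNIV (sh m a)"
      using permutes_inverses(1)[OF sp] by (auto simp: fun_eq_iff)
    then have "\<pi> = \<rho>" using e' ab by metis
    then show "x = y" using xa yb ab by simp
  qed
  have card: "card D = card PN"
    unfolding D_def PN_def Pm_def using card_permutations[of "{1..m}" m] card_permutations[of "{1..Suc m}" "Suc m"]
    by (simp add: card_cartesian_product)
  have img: "h ` D = PN"
    by (rule card_subset_eq[OF finPN]) (use hmem card_image[OF hinj] card in auto)
  have "(\<Sum>\<tau>\<in>PN. of_int (sign \<tau>) * f \<tau>) = (\<Sum>x\<in>D. of_int (sign (h x)) * f (h x))"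
    using sum.reindex[OF hinj, of "\<lambda>\<tau>. of_int (sign \<tau>) * f \<tau>"] img by simp
  also have "\<dots> = (\<Sum>a=0..m. \<Sum>\<pi>\<in>Pm. of_int (sign (\<pi> \<circ> sh m a)) * f (\<pi> \<circ> sh m a))"
    unfolding D_def h_def by (simp add: sum.cartesian_product split_def)
  also have "\<dots> = (\<Sum>a=0..m. \<Sum>\<pi>\<in>Pm. (-1) ^ (m - a) * (of_int (sign \<pi>) * f (\<pi> \<circ> sh m a)))"
  proof (intro sum.cong refl)
    fix a \<pi> assume a: "a \<in> {0..m}" and p: "\<pi> \<in> Pm"
    have "sign (\<pi> \<circ> sh m a) = sign \<pi> * sign (sh m a)"
      by (rule sign_compose) (use a p sh_props[of a m] in \<open>auto simp: Pm_def intro: permutes_imp_permutation\<close>)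
    then show "of_int (sign (\<pi> \<circ> sh m a)) * f (\<pi> \<circ> sh m a) = (-1) ^ (m - a) * (of_int (sign \<pi>) * f (\<pi> \<circ> sh m a))"
      using sh_props[of a m] a by (simp add: ac_simps)
  qed
  finally show ?thesis unfolding PN_def Pm_def by simp
qed


fun hasNE :: "arrow \<Rightarrow> bool" where
  "hasNE NE = True" | "hasNE NW = False" | "hasNE NWNE = True"
fun hasNW :: "arrow \<Rightarrow> bool" where
  "hasNW NE = False" | "hasNW NW = True" | "hasNW NWNE = True"
definition ne :: "arrow \<Rightarrow> int" where "ne a = (if hasNE a then 1 else 0)"
definition nw :: "arrow \<Rightarrow> int" where "nw a = (if hasNW a then 1 else 0)"

lemma arrow_UNIV: "(UNIV :: arrow set) = {NW, NE, NWNE}"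
  using arrow.exhaust by auto

lemma finite_arrow[simp]: "finite (UNIV :: arrow set)"
  by (simp add: arrow_UNIV)

lemma prod_remove2:
  assumes "finite A" "a \<in> A" "b \<in> A" "a \<noteq> b"
  shows "prod f A = f a * f b * prod f (A - {a, b})"
proof -
  have "prod f A = f a * prod f (A - {a})" using prod.remove assms by metis
  also have "prod f (A - {a}) = f b * prod f (A - {a} - {b})"
    using prod.remove[of "A - {a}" b f] assms by auto
  also have "A - {a} - {b} = A - {a, b}" by auto
  finally show ?thesis by (simp add: mult.assoc)
qed

locale amt_ctx =
  fixes u v w :: "'a::field" and X :: "nat \<Rightarrow> 'a"
  assumes Xnz[simp]: "X i \<noteq> 0"
begin

definition Q :: "'a \<Rightarrow> 'a \<Rightarrow> 'a" where "Q x y = u*x + v/y + w*x/y"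
definition Cp :: "nat \<Rightarrow> (nat \<Rightarrow> nat) \<Rightarrow> 'a" where
  "Cp m \<pi> = (\<Prod>q=1..m. \<Prod>p=1..<q. Q (X (\<pi> p)) (X (\<pi> q)))"
definition Ep :: "nat \<Rightarrow> (nat \<Rightarrow> int) \<Rightarrow> (nat \<Rightarrow> nat) \<Rightarrow> 'a" where
  "Ep n k \<pi> = (\<Prod>j=1..n. X (\<pi> j) powi (k j + int j - 1))"
definition g :: "nat \<Rightarrow> (nat \<Rightarrow> int) \<Rightarrow> (nat \<Rightarrow> nat) \<Rightarrow> 'a" where
  "g n k \<pi> = Ep n k \<pi> * Cp n \<pi>"
definition G :: "nat \<Rightarrow> (nat \<Rightarrow> int) \<Rightarrow> 'a" where
  "G n k = (\<Sum>\<sigma> | \<sigma> permutes {1..n}. of_int (sign \<sigma>) * g n k \<sigma>)"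

definition Lpart :: "nat \<Rightarrow> (nat \<Rightarrow> int) \<Rightarrow> 'a \<Rightarrow> nat set \<Rightarrow> (nat \<Rightarrow> nat) \<Rightarrow> 'a" where
  "Lpart m k x S \<pi> = (\<Prod>j=1..m. if j \<in> S then (X (\<pi> j) / x) powi k j
                                  else - ((X (\<pi> j) / x) powi (k (Suc j) + 1)))"
definition qq :: "nat \<Rightarrow> 'a \<Rightarrow> nat set \<Rightarrow> (nat \<Rightarrow> nat) \<Rightarrow> nat \<Rightarrow> 'a" where
  "qq m x S \<pi> i = Q (if i \<in> S then X (\<pi> i) else x) (if i - 1 \<in> {1..m} - S then X (\<pi> (i - 1)) else x)"
definition Rt :: "nat \<Rightarrow> (nat \<Rightarrow> int) \<Rightarrow> nat set \<Rightarrow> (nat \<Rightarrow> nat) \<Rightarrow> 'a" where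
  "Rt m k S \<pi> = Cp m \<pi> * X (Suc m) powi (\<Sum>j=1..Suc m. k j) * X (Suc m) ^ m
      * (\<Prod>j=1..m. X (\<pi> j) powi (int j - 1)) * Lpart m k (X (Suc m)) S \<pi>
      * (\<Prod>i=1..Suc m. qq m (X (Suc m)) S \<pi> i)"

lemma Cp_pairs: "Cp m \<sigma> = (\<Prod>(q,p)\<in>Sigma {1..m} (\<lambda>q. {1..<q}). Q (X (\<sigma> p)) (X (\<sigma> q)))"
  unfolding Cp_def by (subst prod.Sigma) auto

lemma Cp_swap:
  assumes j: "1 \<le> j" "Suc j \<le> m"
  shows "\<exists>CR. Cp m (\<pi> \<circ> Transposition.transpose j (Suc j)) = Q (X (\<pi> (Suc j))) (X (\<pi> j)) * CR
       \<and> Cp m \<pi> = Q (X (\<pi> j)) (X (\<pi> (Suc j))) * CR"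
proof -
  define t where "t = Transposition.transpose j (Suc j)"
  define Pr where "Pr = Sigma {1..m} (\<lambda>q. {1..<q})"
  define R where "R = Pr - {(Suc j, j)}"
  define \<psi> where "\<psi> = (\<lambda>(q::nat, p::nat). (t q, t p))"
  have finPr: "finite Pr" unfolding Pr_def by auto
  have inPr: "(Suc j, j) \<in> Pr" unfolding Pr_def using j by auto
  have tt: "\<And>x. t (t x) = x" unfolding t_def by simp
  have tr: "\<And>x. x \<in> {1..m} \<Longrightarrow> t x \<in> {1..m}" unfolding t_def using j by (auto simp: Transposition.transpose_def)
  have psiR: "\<psi> x \<in> R" if xR: "x \<in> R" for x
  proof -
    obtain q p where x: "x = (q, p)" "q \<in> {1..m}" "1 \<le> p" "p < q" "(q,p) \<noteq> (Suc j, j)"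
      using xR unfolding R_def Pr_def by (cases x) auto
    have "t p < t q" using x unfolding t_def by (auto simp: Transposition.transpose_def)
    moreover have "t p \<ge> 1" using x j unfolding t_def by (auto simp: Transposition.transpose_def)
    moreover have "(t q, t p) \<noteq> (Suc j, j)" using x unfolding t_def by (auto simp: Transposition.transpose_def)
    ultimately show ?thesis using x tr unfolding R_def Pr_def \<psi>_def by auto
  qed
  have bij: "bij_betw \<psi> R R"
    by (rule bij_betw_byWitness[where f'=\<psi>]) (use psiR tt in \<open>auto simp: \<psi>_def\<close>)
  define F where "F \<sigma> = (\<lambda>(q::nat, p::nat). Q (X (\<sigma> p)) (X (\<sigma> q)))" for \<sigma>
  have CpF: "Cp m \<sigma> = prod (F \<sigma>) Pr" for \<sigma> unfolding Cp_pairs Pr_def F_def ..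
  have "prod (F (\<pi> \<circ> t)) R = prod (\<lambda>x. F \<pi> (\<psi> x)) R"
    by (rule prod.cong) (auto simp: F_def \<psi>_def)
  also have "\<dots> = prod (F \<pi>) R" by (rule prod.reindex_bij_betw[OF bij])
  finally have eR: "prod (F (\<pi> \<circ> t)) R = prod (F \<pi>) R" .
  have "Cp m (\<pi> \<circ> t) = F (\<pi> \<circ> t) (Suc j, j) * prod (F (\<pi> \<circ> t)) R"
    unfolding CpF R_def using prod.remove[OF finPr inPr] by blast
  moreover have "Cp m \<pi> = F \<pi> (Suc j, j) * prod (F \<pi>) R"
    unfolding CpF R_def using prod.remove[OF finPr inPr] by blast
  moreover have "F (\<pi> \<circ> t) (Suc j, j) = Q (X (\<pi> (Suc j))) (X (\<pi> j))" "F \<pi> (Suc j, j) = Q (X (\<pi> j)) (X (\<pi> (Suc j)))"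
    unfolding F_def t_def by auto
  ultimately show ?thesis unfolding t_def[symmetric] using eR by auto
qed

lemma qq_swap:
  assumes j: "1 \<le> j" "Suc j \<le> m" "j \<notin> S" "Suc j \<in> S"
  shows "\<exists>R. (\<Prod>i=1..Suc m. qq m x S (\<pi> \<circ> Transposition.transpose j (Suc j)) i) = Q (X (\<pi> j)) (X (\<pi> (Suc j))) * R
       \<and> (\<Prod>i=1..Suc m. qq m x S \<pi> i) = Q (X (\<pi> (Suc j))) (X (\<pi> j)) * R"
proof -
  define t where "t = Transposition.transpose j (Suc j)"
  have fin: "finite {1..Suc m}" and mem: "Suc j \<in> {1..Suc m}" using j by auto
  have e1: "qq m x S (\<pi> \<circ> t) i = qq m x S \<pi> i" if "i \<in> {1..Suc m} - {Suc j}" for i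
  proof -
    have a: "i \<in> S \<Longrightarrow> t i = i" using that j unfolding t_def by (auto simp: Transposition.transpose_def)
    have b: "i - 1 \<in> {1..m} - S \<Longrightarrow> t (i - 1) = i - 1" using that j unfolding t_def by (auto simp: Transposition.transpose_def)
    show ?thesis unfolding qq_def using a b by auto
  qed
  have e2: "qq m x S (\<pi> \<circ> t) (Suc j) = Q (X (\<pi> j)) (X (\<pi> (Suc j)))"
    "qq m x S \<pi> (Suc j) = Q (X (\<pi> (Suc j))) (X (\<pi> j))"
    unfolding qq_def t_def using j by auto
  show ?thesis unfolding t_def[symmetric]
    using prod.remove[OF fin mem, of "qq m x S (\<pi> \<circ> t)"] prod.remove[OF fin mem, of "qq m x S \<pi>"] e1 e2
    by (metis (no_types, lifting) prod.cong)
qed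

definition ee :: "(nat \<Rightarrow> int) \<Rightarrow> 'a \<Rightarrow> nat set \<Rightarrow> nat \<Rightarrow> 'a \<Rightarrow> 'a" where
  "ee k x S j y = y powi (int j - 1) * (if j \<in> S then (y / x) powi k j else - ((y / x) powi (k (Suc j) + 1)))"

lemma ee_prod: "(\<Prod>j=1..m. X (\<pi> j) powi (int j - 1)) * Lpart m k x S \<pi> = (\<Prod>j=1..m. ee k x S j (X (\<pi> j)))"
  unfolding Lpart_def ee_def by (simp add: prod.distrib)

lemma ee_swap:
  assumes "j \<notin> S" "Suc j \<in> S" "a \<noteq> 0" "b \<noteq> 0"
  shows "ee k x S j a * ee k x S (Suc j) b = ee k x S j b * ee k x S (Suc j) a"
proof -
  define K where "K = k (Suc j)"
  have h1: "y powi (int j - 1) * (y / x) powi (K + 1) = y powi (int j + K) / x powi (K + 1)" if "y \<noteq> 0" for y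
    using that by (simp add: power_int_divide_distrib power_int_add[symmetric])
  have h2: "y powi int j * (y / x) powi K = y powi (int j + K) / x powi K" if "y \<noteq> 0" for y
  proof -
    have "y powi (int j + K) = y powi int j * y powi K" using power_int_add[of y "int j" K] that by simp
    then show ?thesis by (simp add: power_int_divide_distrib)
  qed
  have "ee k x S j a * ee k x S (Suc j) b = - ((a powi (int j + K) / x powi (K + 1)) * (b powi (int j + K) / x powi K))"
    using assms h1[of a] h2[of b] unfolding ee_def K_def[symmetric] by simp
  moreover have "ee k x S j b * ee k x S (Suc j) a = - ((b powi (int j + K) / x powi (K + 1)) * (a powi (int j + K) / x powi K))"
    using assms h1[of b] h2[of a] unfolding ee_def K_def[symmetric] by simp
  ultimately show ?thesis by (simp add: ac_simps)
qed

lemma ee_prod_swap: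
  assumes j: "1 \<le> j" "Suc j \<le> m" "j \<notin> S" "Suc j \<in> S"
  shows "(\<Prod>i=1..m. ee k x S i (X ((\<pi> \<circ> Transposition.transpose j (Suc j)) i))) = (\<Prod>i=1..m. ee k x S i (X (\<pi> i)))"
proof -
  define t where "t = Transposition.transpose j (Suc j)"
  have fin: "finite {1..m}" and m1: "j \<in> {1..m}" "Suc j \<in> {1..m}" "j \<noteq> Suc j" using j by auto
  have rest: "(\<Prod>i\<in>{1..m} - {j, Suc j}. ee k x S i (X ((\<pi> \<circ> t) i))) = (\<Prod>i\<in>{1..m} - {j, Suc j}. ee k x S i (X (\<pi> i)))"
    by (rule prod.cong) (auto simp: t_def)
  show ?thesis unfolding t_def[symmetric]
    using prod_remove2[OF fin m1, of "\<lambda>i. ee k x S i (X ((\<pi> \<circ> t) i))"]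
          prod_remove2[OF fin m1, of "\<lambda>i. ee k x S i (X (\<pi> i))"] rest
          ee_swap[OF j(3,4), of "X (\<pi> (Suc j))" "X (\<pi> j)" k x]
    by (simp add: t_def)
qed

lemma Rt_swap:
  assumes j: "1 \<le> j" "Suc j \<le> m" "j \<notin> S" "Suc j \<in> S"
  shows "Rt m k S (\<pi> \<circ> Transposition.transpose j (Suc j)) = Rt m k S \<pi>"
proof -
  define t where "t = Transposition.transpose j (Suc j)"
  define x where "x = X (Suc m)"
  obtain CR where C: "Cp m (\<pi> \<circ> t) = Q (X (\<pi> (Suc j))) (X (\<pi> j)) * CR"
     "Cp m \<pi> = Q (X (\<pi> j)) (X (\<pi> (Suc j))) * CR"
    using Cp_swap[OF j(1,2), of \<pi>] unfolding t_def by blast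
  obtain R where R: "(\<Prod>i=1..Suc m. qq m x S (\<pi> \<circ> t) i) = Q (X (\<pi> j)) (X (\<pi> (Suc j))) * R"
     "(\<Prod>i=1..Suc m. qq m x S \<pi> i) = Q (X (\<pi> (Suc j))) (X (\<pi> j)) * R"
    using qq_swap[OF j, of x \<pi>] unfolding t_def by blast
  have E: "(\<Prod>j=1..m. X ((\<pi> \<circ> t) j) powi (int j - 1)) * Lpart m k x S (\<pi> \<circ> t)
         = (\<Prod>j=1..m. X (\<pi> j) powi (int j - 1)) * Lpart m k x S \<pi>"
    unfolding ee_prod using ee_prod_swap[OF j] unfolding t_def by simp
  have "Rt m k S (\<pi> \<circ> t) = (x powi (\<Sum>j=1..Suc m. k j) * x ^ m) * (Cp m (\<pi> \<circ> t) * (\<Prod>i=1..Suc m. qq m x S (\<pi> \<circ> t) i))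
     * ((\<Prod>j=1..m. X ((\<pi> \<circ> t) j) powi (int j - 1)) * Lpart m k x S (\<pi> \<circ> t))"
    unfolding Rt_def x_def by (simp add: ac_simps)
  also have "\<dots> = (x powi (\<Sum>j=1..Suc m. k j) * x ^ m) * (Cp m \<pi> * (\<Prod>i=1..Suc m. qq m x S \<pi> i))
     * ((\<Prod>j=1..m. X (\<pi> j) powi (int j - 1)) * Lpart m k x S \<pi>)"
    using C R E by (simp add: ac_simps)
  also have "\<dots> = Rt m k S \<pi>"
    unfolding Rt_def x_def by (simp add: ac_simps)
  finally show ?thesis unfolding t_def .
qed

lemma Rt_bad_zero:
  assumes j: "1 \<le> j" "Suc j \<le> m" "j \<notin> S" "Suc j \<in> S"
  shows "(\<Sum>\<pi> | \<pi> permutes {1..m}. of_int (sign \<pi>) * Rt m k S \<pi>) = 0"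
  by (rule asym_transp_zero[where a=j and b="Suc j"]) (use j Rt_swap[OF j] in auto)

end

lemma prod_split2: "a \<le> b \<Longrightarrow> (\<Prod>j=1..b. f j) = (\<Prod>j=1..a. f j) * (\<Prod>j=Suc a..b. (f j :: 'a::comm_monoid_mult))"
proof (induction b)
  case 0 then show ?case by simp
next
  case (Suc b)
  show ?case
  proof (cases "a = Suc b")
    case True then show ?thesis by simp
  next
    case False
    then have "a \<le> b" using Suc by simp
    then show ?thesis using Suc by (simp add: prod.nat_ivl_Suc' mult.assoc)
  qed
qed

lemma sum_split2: "a \<le> b \<Longrightarrow> (\<Sum>j=1..b. f j) = (\<Sum>j=1..a. f j) + (\<Sum>j=Suc a..b. (f j :: 'a::comm_monoid_add))"
proof (induction b)
  case 0 then show ?case by simp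
next
  case (Suc b)
  show ?case
  proof (cases "a = Suc b")
    case True then show ?thesis by simp
  next
    case False
    then have "a \<le> b" using Suc by simp
    then show ?thesis using Suc by (simp add: sum.nat_ivl_Suc' add.assoc)
  qed
qed

lemma prod_split3: "a \<le> n \<Longrightarrow> (\<Prod>j=1..Suc n. f j) = (\<Prod>j=1..a. f j) * f (Suc a) * (\<Prod>j=Suc a..n. (f (Suc j) :: 'a::comm_monoid_mult))"
proof -
  assume a: "a \<le> n"
  have "(\<Prod>j=Suc a..Suc n. f j) = f (Suc a) * (\<Prod>j=Suc a..n. f (Suc j))"
    using a by (subst prod.atLeast_Suc_atMost) (simp_all add: prod.shift_bounds_cl_Suc_ivl del: prod.cl_ivl_Suc)
  then show ?thesis using prod_split2[of a "Suc n" f] a by (simp add: mult.assoc)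
qed

lemma sum_split3: "a \<le> n \<Longrightarrow> (\<Sum>j=1..Suc n. f j) = (\<Sum>j=1..a. f j) + f (Suc a) + (\<Sum>j=Suc a..n. (f (Suc j) :: 'a::comm_monoid_add))"
proof -
  assume a: "a \<le> n"
  have "(\<Sum>j=Suc a..Suc n. f j) = f (Suc a) + (\<Sum>j=Suc a..n. f (Suc j))"
    using a by (subst sum.atLeast_Suc_atMost) (simp_all add: sum.shift_bounds_cl_Suc_ivl del: sum.cl_ivl_Suc)
  then show ?thesis using sum_split2[of a "Suc n" f] a by (simp add: add.assoc)
qed

lemma prod_powi: "(x::'a::field) \<noteq> 0 \<Longrightarrow> (\<Prod>j\<in>A. x powi e j) = x powi (\<Sum>j\<in>A. e j)"
  by (induction A rule: infinite_finite_induct) (auto simp: power_int_add)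

context amt_ctx begin

lemma sh_vals:
  assumes a: "a \<le> m" and p: "\<pi> permutes {1..m}"
  shows "j \<le> a \<Longrightarrow> (\<pi> \<circ> sh m a) j = \<pi> j"
    and "(\<pi> \<circ> sh m a) (Suc a) = Suc m"
    and "Suc a \<le> j \<Longrightarrow> j \<le> m \<Longrightarrow> (\<pi> \<circ> sh m a) (Suc j) = \<pi> j"
  using permutes_not_in[OF p, of "Suc m"] by (auto simp: sh_def)

lemma Cp_sh:
  assumes a: "a \<le> m" and p: "\<pi> permutes {1..m}"
  shows "Cp (Suc m) (\<pi> \<circ> sh m a) = Cp m \<pi> * (\<Prod>j=1..a. Q (X (\<pi> j)) (X (Suc m))) * (\<Prod>j=Suc a..m. Q (X (Suc m)) (X (\<pi> j)))"
proof -
  define \<sigma> where "\<sigma> = \<pi> \<circ> sh m a"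
  define x where "x = X (Suc m)"
  note sv = sh_vals[OF a p, folded \<sigma>_def]
  define inC where "inC q = (\<Prod>p=1..<q. Q (X (\<pi> p)) (X (\<pi> q)))" for q
  have "Cp (Suc m) \<sigma> = (\<Prod>q=1..a. \<Prod>p=1..<q. Q (X (\<sigma> p)) (X (\<sigma> q)))
       * (\<Prod>p=1..<Suc a. Q (X (\<sigma> p)) (X (\<sigma> (Suc a))))
       * (\<Prod>q=Suc a..m. \<Prod>p=1..<Suc q. Q (X (\<sigma> p)) (X (\<sigma> (Suc q))))"
    unfolding Cp_def using prod_split3[OF a] by blast
  also have "(\<Prod>q=1..a. \<Prod>p=1..<q. Q (X (\<sigma> p)) (X (\<sigma> q))) = (\<Prod>q=1..a. inC q)"
    unfolding inC_def by (rule prod.cong[OF refl], rule prod.cong[OF refl]) (auto simp: sv)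
  also have "(\<Prod>p=1..<Suc a. Q (X (\<sigma> p)) (X (\<sigma> (Suc a)))) = (\<Prod>j=1..a. Q (X (\<pi> j)) x)"
    unfolding x_def using sv by (auto simp: atLeastLessThanSuc_atLeastAtMost intro!: prod.cong)
  also have "(\<Prod>q=Suc a..m. \<Prod>p=1..<Suc q. Q (X (\<sigma> p)) (X (\<sigma> (Suc q)))) = (\<Prod>q=Suc a..m. inC q * Q x (X (\<pi> q)))"
  proof (rule prod.cong[OF refl])
    fix q assume q: "q \<in> {Suc a..m}"
    then obtain q' where q': "q = Suc q'" "a \<le> q'" by (cases q) auto
    have "(\<Prod>p=1..<Suc q. Q (X (\<sigma> p)) (X (\<sigma> (Suc q)))) = (\<Prod>p=1..Suc q'. Q (X (\<sigma> p)) (X (\<pi> q)))"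
      using q sv(3)[of q] by (simp add: atLeastLessThanSuc_atLeastAtMost q')
    also have "\<dots> = (\<Prod>p=1..a. Q (X (\<sigma> p)) (X (\<pi> q))) * Q (X (\<sigma> (Suc a))) (X (\<pi> q)) * (\<Prod>p=Suc a..q'. Q (X (\<sigma> (Suc p))) (X (\<pi> q)))"
      using prod_split3[OF q'(2)] by blast
    also have "\<dots> = (\<Prod>p=1..a. Q (X (\<pi> p)) (X (\<pi> q))) * Q x (X (\<pi> q)) * (\<Prod>p=Suc a..q'. Q (X (\<pi> p)) (X (\<pi> q)))"
      using sv q q' unfolding x_def by (auto intro!: prod.cong)
    also have "\<dots> = inC q * Q x (X (\<pi> q))"
      unfolding inC_def q'(1) atLeastLessThanSuc_atLeastAtMost using prod_split2[OF q'(2), of "\<lambda>p. Q (X (\<pi> p)) (X (\<pi> (Suc q')))"]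
      by (simp add: ac_simps)
    finally show "(\<Prod>p=1..<Suc q. Q (X (\<sigma> p)) (X (\<sigma> (Suc q)))) = inC q * Q x (X (\<pi> q))" .
  qed
  also have "Cp m \<pi> = (\<Prod>q=1..a. inC q) * (\<Prod>q=Suc a..m. inC q)"
    unfolding Cp_def inC_def using prod_split2[OF a] by blast
  ultimately show ?thesis unfolding \<sigma>_def[symmetric] x_def[symmetric] by (simp add: prod.distrib ac_simps)
qed

lemma qq_good:
  assumes a: "a \<le> m"
  shows "(\<Prod>i=1..Suc m. qq m x {1..a} \<pi> i) = (\<Prod>j=1..a. Q (X (\<pi> j)) x) * Q x x * (\<Prod>j=Suc a..m. Q x (X (\<pi> j)))"
proof -
  have "(\<Prod>i=1..Suc m. qq m x {1..a} \<pi> i) = (\<Prod>i=1..a. qq m x {1..a} \<pi> i) * qq m x {1..a} \<pi> (Suc a) * (\<Prod>j=Suc a..m. qq m x {1..a} \<pi> (Suc j))"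
    using prod_split3[OF a] by blast
  also have "(\<Prod>i=1..a. qq m x {1..a} \<pi> i) = (\<Prod>j=1..a. Q (X (\<pi> j)) x)"
    by (rule prod.cong) (auto simp: qq_def)
  also have "qq m x {1..a} \<pi> (Suc a) = Q x x" by (auto simp: qq_def)
  also have "(\<Prod>j=Suc a..m. qq m x {1..a} \<pi> (Suc j)) = (\<Prod>j=Suc a..m. Q x (X (\<pi> j)))"
    by (rule prod.cong) (auto simp: qq_def)
  finally show ?thesis .
qed

end

lemma powi_div_split: "((y::'a::field) / x) powi k = y powi k * x powi (- k)"
  by (subst power_int_divide_distrib) (simp add: power_int_minus divide_inverse)

lemma powi_mult_same: "(y::'a::field) \<noteq> 0 \<Longrightarrow> y powi a * y powi b = y powi (a + b)"
  by (simp add: power_int_add)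

context amt_ctx begin

lemma Ep_sh:
  assumes a: "a \<le> m" and p: "\<pi> permutes {1..m}"
  shows "Ep (Suc m) k (\<pi> \<circ> sh m a) = (\<Prod>j=1..a. X (\<pi> j) powi (k j + int j - 1)) * X (Suc m) powi (k (Suc a) + int a)
            * (\<Prod>j=Suc a..m. X (\<pi> j) powi (k (Suc j) + int j))"
proof -
  note sv = sh_vals[OF a p]
  have "Ep (Suc m) k (\<pi> \<circ> sh m a) = (\<Prod>j=1..a. X ((\<pi> \<circ> sh m a) j) powi (k j + int j - 1))
        * X ((\<pi> \<circ> sh m a) (Suc a)) powi (k (Suc a) + int (Suc a) - 1)
        * (\<Prod>j=Suc a..m. X ((\<pi> \<circ> sh m a) (Suc j)) powi (k (Suc j) + int (Suc j) - 1))"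
    unfolding Ep_def using prod_split3[OF a] by blast
  also have "\<dots> = (\<Prod>j=1..a. X (\<pi> j) powi (k j + int j - 1)) * X (Suc m) powi (k (Suc a) + int a)
            * (\<Prod>j=Suc a..m. X (\<pi> j) powi (k (Suc j) + int j))"
    using sv by (auto intro!: prod.cong arg_cong2[where f="(*)"])
  finally show ?thesis .
qed

lemma E_good:
  assumes a: "a \<le> m" and x: "x \<noteq> 0"
  shows "x powi (\<Sum>j=1..Suc m. k j) * x ^ m * (\<Prod>j=1..m. X (\<pi> j) powi (int j - 1)) * Lpart m k x {1..a} \<pi>
       = (-1) ^ (m - a) * ((\<Prod>j=1..a. X (\<pi> j) powi (k j + int j - 1)) * x powi (k (Suc a) + int a)
            * (\<Prod>j=Suc a..m. X (\<pi> j) powi (k (Suc j) + int j)))"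
proof -
  define A where "A = (\<Prod>j=1..a. X (\<pi> j) powi (k j + int j - 1))"
  define B where "B = (\<Prod>j=Suc a..m. X (\<pi> j) powi (k (Suc j) + int j))"
  have e1: "ee k x {1..a} j (X (\<pi> j)) = X (\<pi> j) powi (k j + int j - 1) * x powi (- k j)" if "j \<in> {1..a}" for j
  proof -
    have "X (\<pi> j) powi (k j + int j - 1) = X (\<pi> j) powi (int j - 1) * X (\<pi> j) powi (k j)"
      by (simp add: powi_mult_same algebra_simps)
    then show ?thesis using that x by (simp add: ee_def powi_div_split)
  qed
  have e2: "ee k x {1..a} j (X (\<pi> j)) = (-1) * (X (\<pi> j) powi (k (Suc j) + int j) * x powi (- (k (Suc j) + 1)))"
    if "j \<in> {Suc a..m}" for j
  proof -
    have "X (\<pi> j) powi (k (Suc j) + int j) = X (\<pi> j) powi (int j - 1) * X (\<pi> j) powi (k (Suc j) + 1)"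
      by (simp add: powi_mult_same algebra_simps)
    then show ?thesis using that x by (simp add: ee_def powi_div_split)
  qed
  have P1: "(\<Prod>j=1..a. ee k x {1..a} j (X (\<pi> j))) = A * x powi (\<Sum>j=1..a. - k j)"
    using prod.cong[OF refl e1, of "{1..a}"] unfolding A_def by (simp add: prod.distrib prod_powi x)
  have P2: "(\<Prod>j=Suc a..m. ee k x {1..a} j (X (\<pi> j))) = (-1) ^ (m - a) * (B * x powi (\<Sum>j=Suc a..m. - (k (Suc j) + 1)))"
  proof -
    have "(\<Prod>j=Suc a..m. ee k x {1..a} j (X (\<pi> j))) = (\<Prod>j=Suc a..m. (-1) * (X (\<pi> j) powi (k (Suc j) + int j) * x powi (- (k (Suc j) + 1))))"
      by (rule prod.cong[OF refl]) (rule e2)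
    also have "\<dots> = (\<Prod>j=Suc a..m. (-1::'a)) * ((\<Prod>j=Suc a..m. X (\<pi> j) powi (k (Suc j) + int j)) * (\<Prod>j=Suc a..m. x powi (- (k (Suc j) + 1))))"
      by (simp only: prod.distrib)
    also have "(\<Prod>j=Suc a..m. (-1::'a)) = (-1) ^ (m - a)" by simp
    finally show ?thesis unfolding B_def prod_powi[OF x] .
  qed
  have split: "(\<Prod>j=1..m. ee k x {1..a} j (X (\<pi> j))) = (\<Prod>j=1..a. ee k x {1..a} j (X (\<pi> j))) * (\<Prod>j=Suc a..m. ee k x {1..a} j (X (\<pi> j)))"
    using prod_split2[OF a] by blast
  have ex: "(\<Sum>j=1..Suc m. k j) + int m + (\<Sum>j=1..a. - k j) + (\<Sum>j=Suc a..m. - (k (Suc j) + 1)) = k (Suc a) + int a"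
  proof -
    have "(\<Sum>j=Suc a..m. - (k (Suc j) + 1)) = - (\<Sum>j=Suc a..m. k (Suc j)) - int (m - a)"
      by (simp add: sum_subtractf sum_negf)
    moreover have "(\<Sum>j=1..Suc m. k j) = (\<Sum>j=1..a. k j) + k (Suc a) + (\<Sum>j=Suc a..m. k (Suc j))"
      using sum_split3[OF a] by blast
    ultimately show ?thesis using a by (simp add: sum_negf)
  qed
  have "x powi (\<Sum>j=1..Suc m. k j) * x ^ m * (\<Prod>j=1..m. X (\<pi> j) powi (int j - 1)) * Lpart m k x {1..a} \<pi>
      = x powi (\<Sum>j=1..Suc m. k j) * x powi int m * ((\<Prod>j=1..m. X (\<pi> j) powi (int j - 1)) * Lpart m k x {1..a} \<pi>)"
    by (simp add: mult.assoc)
  also have "\<dots> = (-1) ^ (m - a) * (A * B) * (x powi (\<Sum>j=1..Suc m. k j) * x powi int m * x powi (\<Sum>j=1..a. - k j) * x powi (\<Sum>j=Suc a..m. - (k (Suc j) + 1)))"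
    unfolding ee_prod split P1 P2 by (simp add: ac_simps)
  also have "x powi (\<Sum>j=1..Suc m. k j) * x powi int m * x powi (\<Sum>j=1..a. - k j) * x powi (\<Sum>j=Suc a..m. - (k (Suc j) + 1))
      = x powi (k (Suc a) + int a)"
    by (subst ex[symmetric]) (simp only: power_int_add[OF disjI1[OF x]])
  finally show ?thesis unfolding A_def B_def by (simp add: ac_simps)
qed

lemma Rt_good:
  assumes a: "a \<le> m" and p: "\<pi> permutes {1..m}"
  shows "Rt m k {1..a} \<pi> = (-1) ^ (m - a) * (Q (X (Suc m)) (X (Suc m)) * g (Suc m) k (\<pi> \<circ> sh m a))"
proof -
  define x where "x = X (Suc m)"
  have "Rt m k {1..a} \<pi> = (x powi (\<Sum>j=1..Suc m. k j) * x ^ m * (\<Prod>j=1..m. X (\<pi> j) powi (int j - 1)) * Lpart m k x {1..a} \<pi>)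
       * (Cp m \<pi> * (\<Prod>i=1..Suc m. qq m x {1..a} \<pi> i))"
    unfolding Rt_def x_def by (simp add: ac_simps)
  also have "\<dots> = (-1) ^ (m - a) * (Q x x * g (Suc m) k (\<pi> \<circ> sh m a))"
    unfolding E_good[OF a Xnz[of "Suc m"], folded x_def] qq_good[OF a] g_def Ep_sh[OF a p] Cp_sh[OF a p] x_def[symmetric]
    by (simp add: ac_simps)
  finally show ?thesis unfolding x_def .
qed

end

lemma geom:
  fixes z :: "'a::field"
  assumes z: "z \<noteq> 0" and ab: "\<alpha> \<le> \<beta> + 1"
  shows "(1 - z) * (\<Sum>t\<in>{\<alpha>..\<beta>}. z powi t) = z powi \<alpha> - z powi (\<beta> + 1)"
proof -
  have "\<alpha> - 1 \<le> \<beta>" using ab by simp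
  then show ?thesis
  proof (induction \<beta> rule: int_ge_induct)
    case base
    then show ?case by simp
  next
    case (step i)
    have "{\<alpha>..i + 1} = insert (i + 1) {\<alpha>..i}" using step(1) by auto
    then have "(\<Sum>t\<in>{\<alpha>..i + 1}. z powi t) = z powi (i + 1) + (\<Sum>t\<in>{\<alpha>..i}. z powi t)"
      by simp
    define S where "S = (\<Sum>t\<in>{\<alpha>..i}. z powi t)"
    have e: "z powi (i + 1 + 1) = z powi (i + 1) * z" using z by (rule power_int_add_1[OF disjI1])
    have "(1 - z) * (\<Sum>t\<in>{\<alpha>..i + 1}. z powi t) = z powi (i + 1) - z powi (i + 1) * z + (1 - z) * S"
      unfolding S_def \<open>(\<Sum>t\<in>{\<alpha>..i + 1}. z powi t) = z powi (i + 1) + (\<Sum>t\<in>{\<alpha>..i}. z powi t)\<close>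
      by (simp add: algebra_simps)
    also have "\<dots> = z powi \<alpha> - z powi (i + 1 + 1)"
      using step.IH e unfolding S_def by simp
    finally show ?case .
  qed
qed

lemma sum_arrow: "(\<Sum>a\<in>UNIV. f a) = f NW + f NE + (f NWNE :: 'a::comm_monoid_add)"
  by (simp add: arrow_UNIV add.assoc)

context amt_ctx begin

definition wa :: "'a \<Rightarrow> arrow \<Rightarrow> 'a" where
  "wa x a = (case a of NE \<Rightarrow> u * x | NW \<Rightarrow> v / x | NWNE \<Rightarrow> w)"
definition Arr :: "nat \<Rightarrow> (nat \<Rightarrow> arrow) set" where
  "Arr n = PiE {1..n} (\<lambda>_. UNIV)"
definition Ibox :: "(nat \<Rightarrow> int) \<Rightarrow> (nat \<Rightarrow> arrow) \<Rightarrow> nat \<Rightarrow> int set" where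
  "Ibox k arr j = {k j + ne (arr j) .. k (Suc j) - nw (arr (Suc j))}"
definition box :: "nat \<Rightarrow> (nat \<Rightarrow> int) \<Rightarrow> (nat \<Rightarrow> arrow) \<Rightarrow> (nat \<Rightarrow> int) set" where
  "box n k arr = PiE {1..n-1} (Ibox k arr)"
definition bw :: "nat \<Rightarrow> (nat \<Rightarrow> int) \<Rightarrow> (nat \<Rightarrow> arrow) \<Rightarrow> (nat \<Rightarrow> int) \<Rightarrow> 'a" where
  "bw n k arr l = (\<Prod>i=1..n. wa (X n) (arr i)) * X n powi ((\<Sum>j=1..n. k j) - (\<Sum>j=1..n-1. l j))"

lemma lsum:
  "(\<Sum>l\<in>box (Suc m) k arr. bw (Suc m) k arr l * g m l \<pi>)
   = (\<Prod>i=1..Suc m. wa (X (Suc m)) (arr i)) * X (Suc m) powi (\<Sum>j=1..Suc m. k j) * Cp m \<pi>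
     * (\<Prod>j=1..m. X (\<pi> j) powi (int j - 1) * (\<Sum>t\<in>Ibox k arr j. (X (\<pi> j) / X (Suc m)) powi t))"
proof -
  define x where "x = X (Suc m)"
  define W where "W = (\<Prod>i=1..Suc m. wa x (arr i))"
  define F where "F j t = X (\<pi> j) powi (int j - 1) * (X (\<pi> j) / x) powi t" for j t
  have x0: "x \<noteq> 0" unfolding x_def by simp
  have trm: "bw (Suc m) k arr l * g m l \<pi> = (W * x powi (\<Sum>j=1..Suc m. k j) * Cp m \<pi>) * (\<Prod>j=1..m. F j (l j))" for l
  proof -
    have "x powi ((\<Sum>j=1..Suc m. k j) - (\<Sum>j=1..m. l j)) = x powi (\<Sum>j=1..Suc m. k j) * (\<Prod>j=1..m. x powi (- l j))"
    proof -
      have "(\<Prod>j=1..m. x powi (- l j)) = x powi (- (\<Sum>j=1..m. l j))"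
        using prod_powi[OF x0, of "\<lambda>j. - l j"] by (simp add: sum_negf)
      moreover have "x powi ((\<Sum>j=1..Suc m. k j) - (\<Sum>j=1..m. l j)) = x powi (\<Sum>j=1..Suc m. k j) * x powi (- (\<Sum>j=1..m. l j))"
        using power_int_add[OF disjI1[OF x0], of "\<Sum>j=1..Suc m. k j" "- (\<Sum>j=1..m. l j)"] by simp
      ultimately show ?thesis by simp
    qed
    moreover have "Ep m l \<pi> * (\<Prod>j=1..m. x powi (- l j)) = (\<Prod>j=1..m. F j (l j))"
      unfolding Ep_def F_def prod.distrib[symmetric]
      by (rule prod.cong[OF refl]) (simp add: powi_div_split powi_mult_same algebra_simps)
    ultimately show ?thesis unfolding bw_def g_def W_def x_def[symmetric] by (simp add: ac_simps)
  qed
  have "(\<Sum>l\<in>box (Suc m) k arr. bw (Suc m) k arr l * g m l \<pi>)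
      = (W * x powi (\<Sum>j=1..Suc m. k j) * Cp m \<pi>) * (\<Sum>l\<in>PiE {1..m} (Ibox k arr). \<Prod>j=1..m. F j (l j))"
    unfolding trm box_def by (simp add: sum_distrib_left)
  also have "(\<Sum>l\<in>PiE {1..m} (Ibox k arr). \<Prod>j=1..m. F j (l j)) = (\<Prod>j=1..m. \<Sum>t\<in>Ibox k arr j. F j t)"
    by (rule prod_sum_PiE[symmetric]) (auto simp: Ibox_def)
  also have "\<dots> = (\<Prod>j=1..m. X (\<pi> j) powi (int j - 1) * (\<Sum>t\<in>Ibox k arr j. (X (\<pi> j) / x) powi t))"
    unfolding F_def by (simp add: sum_distrib_left)
  finally show ?thesis unfolding W_def x_def by simp
qed

end

context amt_ctx begin

definition zz :: "(nat \<Rightarrow> nat) \<Rightarrow> 'a \<Rightarrow> nat \<Rightarrow> 'a" where "zz \<pi> x j = X (\<pi> j) / x"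
definition Lf :: "(nat \<Rightarrow> int) \<Rightarrow> (nat \<Rightarrow> nat) \<Rightarrow> 'a \<Rightarrow> (nat \<Rightarrow> arrow) \<Rightarrow> nat \<Rightarrow> 'a" where
  "Lf k \<pi> x arr j = zz \<pi> x j powi k j * (if hasNE (arr j) then zz \<pi> x j else 1)"
definition Uf :: "(nat \<Rightarrow> int) \<Rightarrow> (nat \<Rightarrow> nat) \<Rightarrow> 'a \<Rightarrow> (nat \<Rightarrow> arrow) \<Rightarrow> nat \<Rightarrow> 'a" where
  "Uf k \<pi> x arr j = zz \<pi> x j powi (k (Suc j) + 1) * (if hasNW (arr (Suc j)) then x / X (\<pi> j) else 1)"
definition fac :: "nat \<Rightarrow> 'a \<Rightarrow> nat set \<Rightarrow> (nat \<Rightarrow> nat) \<Rightarrow> nat \<Rightarrow> arrow \<Rightarrow> 'a" where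
  "fac m x S \<pi> i a = wa x a * (if hasNE a \<and> i \<in> S then zz \<pi> x i else 1)
      * (if hasNW a \<and> i - 1 \<in> {1..m} - S then x / X (\<pi> (i - 1)) else 1)"

lemma geom_j:
  assumes x: "x \<noteq> 0" and kj: "k j < k (Suc j)"
  shows "(x - X (\<pi> j)) * (X (\<pi> j) powi (int j - 1) * (\<Sum>t\<in>Ibox k arr j. (X (\<pi> j) / x) powi t))
       = x * X (\<pi> j) powi (int j - 1) * (Lf k \<pi> x arr j - Uf k \<pi> x arr j)"
proof -
  define z where "z = X (\<pi> j) / x"
  have z0: "z \<noteq> 0" unfolding z_def using x by simp
  define \<alpha> where "\<alpha> = k j + ne (arr j)"
  define \<beta> where "\<beta> = k (Suc j) - nw (arr (Suc j))"
  have ab: "\<alpha> \<le> \<beta> + 1" unfolding \<alpha>_def \<beta>_def ne_def nw_def using kj by auto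
  have g: "(1 - z) * (\<Sum>t\<in>{\<alpha>..\<beta>}. z powi t) = z powi \<alpha> - z powi (\<beta> + 1)" by (rule geom[OF z0 ab])
  have xz: "x - X (\<pi> j) = x * (1 - z)" unfolding z_def using x by (simp add: field_simps)
  have La: "z powi \<alpha> = Lf k \<pi> x arr j"
    unfolding Lf_def zz_def z_def[symmetric] \<alpha>_def ne_def using z0 by (simp add: power_int_add)
  have Ub: "z powi (\<beta> + 1) = Uf k \<pi> x arr j"
  proof -
    have "z powi (k (Suc j) + 1 - 1) = z powi (k (Suc j) + 1) * inverse z"
      using z0 by (simp add: power_int_add_1)
    moreover have "inverse z = x / X (\<pi> j)" unfolding z_def by simp
    ultimately show ?thesis
      unfolding Uf_def zz_def z_def[symmetric] \<beta>_def nw_def by (auto simp: algebra_simps)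
  qed
  have "(x - X (\<pi> j)) * (X (\<pi> j) powi (int j - 1) * (\<Sum>t\<in>Ibox k arr j. (X (\<pi> j) / x) powi t))
      = x * X (\<pi> j) powi (int j - 1) * ((1 - z) * (\<Sum>t\<in>{\<alpha>..\<beta>}. z powi t))"
    unfolding xz Ibox_def \<alpha>_def[symmetric] \<beta>_def[symmetric] z_def[symmetric] by (simp add: ac_simps)
  then show ?thesis unfolding g La Ub .
qed

lemma fac_sum_gen:
  assumes x: "x \<noteq> 0" and y: "y1 \<noteq> 0" "y2 \<noteq> 0"
  shows "(\<Sum>a\<in>UNIV. wa x a * (if hasNE a \<and> P then y1 / x else 1) * (if hasNW a \<and> R then x / y2 else 1))
     = Q (if P then y1 else x) (if R then y2 else x)"
  using x y by (cases P; cases R) (simp_all add: Q_def wa_def sum_arrow field_simps)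

lemma fac_sum:
  assumes x: "x \<noteq> 0"
  shows "(\<Sum>a\<in>UNIV. fac m x S \<pi> i a) = qq m x S \<pi> i"
  unfolding fac_def qq_def zz_def by (rule fac_sum_gen[OF x Xnz Xnz])

lemma Lpart_split:
  assumes S: "S \<subseteq> {1..m}"
  shows "Lpart m k x S \<pi> = (\<Prod>j\<in>S. zz \<pi> x j powi k j) * (\<Prod>j\<in>{1..m} - S. - (zz \<pi> x j powi (k (Suc j) + 1)))"
proof -
  have "Lpart m k x S \<pi> = (\<Prod>j\<in>{1..m} \<inter> {j. j \<in> S}. zz \<pi> x j powi k j) * (\<Prod>j\<in>{1..m} \<inter> - {j. j \<in> S}. - (zz \<pi> x j powi (k (Suc j) + 1)))"
    unfolding Lpart_def zz_def by (rule prod.If_cases) simp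
  also have "{1..m} \<inter> {j. j \<in> S} = S" using S by auto
  also have "{1..m} \<inter> - {j. j \<in> S} = {1..m} - S" by auto
  finally show ?thesis .
qed

lemma Apart:
  assumes S: "S \<subseteq> {1..m}"
  shows "(\<Prod>j\<in>S. if hasNE (arr j) then zz \<pi> x j else 1) = (\<Prod>i=1..Suc m. if hasNE (arr i) \<and> i \<in> S then zz \<pi> x i else 1)"
proof -
  have "(\<Prod>i=1..Suc m. if hasNE (arr i) \<and> i \<in> S then zz \<pi> x i else 1) = (\<Prod>i=1..Suc m. if i \<in> S then (if hasNE (arr i) then zz \<pi> x i else 1) else 1)"
    by (rule prod.cong) auto
  also have "\<dots> = (\<Prod>i\<in>{1..Suc m} \<inter> {i. i \<in> S}. if hasNE (arr i) then zz \<pi> x i else 1) * (\<Prod>i\<in>{1..Suc m} \<inter> - {i. i \<in> S}. 1)"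
    by (rule prod.If_cases) simp
  also have "{1..Suc m} \<inter> {i. i \<in> S} = S" using S by auto
  finally show ?thesis by simp
qed

lemma Bpart:
  assumes S: "S \<subseteq> {1..m}"
  shows "(\<Prod>j\<in>{1..m} - S. if hasNW (arr (Suc j)) then x / X (\<pi> j) else 1)
       = (\<Prod>i=1..Suc m. if hasNW (arr i) \<and> i - 1 \<in> {1..m} - S then x / X (\<pi> (i - 1)) else 1)"
proof -
  define h where "h i = (if hasNW (arr i) then x / X (\<pi> (i - 1)) else 1)" for i
  have "(\<Prod>i=1..Suc m. if hasNW (arr i) \<and> i - 1 \<in> {1..m} - S then x / X (\<pi> (i - 1)) else 1)
      = (\<Prod>i=1..Suc m. if i - 1 \<in> {1..m} - S then h i else 1)"
    unfolding h_def by (rule prod.cong) auto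
  also have "\<dots> = (\<Prod>i\<in>{1..Suc m} \<inter> {i. i - 1 \<in> {1..m} - S}. h i) * (\<Prod>i\<in>{1..Suc m} \<inter> - {i. i - 1 \<in> {1..m} - S}. 1)"
    by (rule prod.If_cases) simp
  also have "{1..Suc m} \<inter> {i. i - 1 \<in> {1..m} - S} = Suc ` ({1..m} - S)"
  proof
    show "{1..Suc m} \<inter> {i. i - 1 \<in> {1..m} - S} \<subseteq> Suc ` ({1..m} - S)"
    proof
      fix i assume i: "i \<in> {1..Suc m} \<inter> {i. i - 1 \<in> {1..m} - S}"
      then have "i = Suc (i - 1)" "i - 1 \<in> {1..m} - S" by auto
      then show "i \<in> Suc ` ({1..m} - S)" by (metis imageI)
    qed
    show "Suc ` ({1..m} - S) \<subseteq> {1..Suc m} \<inter> {i. i - 1 \<in> {1..m} - S}" by auto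
  qed
  also have "(\<Prod>i\<in>Suc ` ({1..m} - S). h i) = (\<Prod>j\<in>{1..m} - S. h (Suc j))"
    using prod.reindex[of Suc "{1..m} - S" h] by (simp add: comp_def)
  finally have "(\<Prod>i=1..Suc m. if hasNW (arr i) \<and> i - 1 \<in> {1..m} - S then x / X (\<pi> (i - 1)) else 1) = (\<Prod>j\<in>{1..m} - S. h (Suc j))" by simp
  then show ?thesis unfolding h_def diff_Suc_1 by (rule sym)
qed

lemma arr_S_sum:
  assumes S: "S \<subseteq> {1..m}" and x: "x \<noteq> 0"
  shows "(\<Sum>arr\<in>Arr (Suc m). (\<Prod>i=1..Suc m. wa x (arr i)) * ((\<Prod>j\<in>S. Lf k \<pi> x arr j) * (\<Prod>j\<in>{1..m} - S. - Uf k \<pi> x arr j)))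
       = Lpart m k x S \<pi> * (\<Prod>i=1..Suc m. qq m x S \<pi> i)"
proof -
  have e: "(\<Prod>i=1..Suc m. wa x (arr i)) * ((\<Prod>j\<in>S. Lf k \<pi> x arr j) * (\<Prod>j\<in>{1..m} - S. - Uf k \<pi> x arr j))
        = Lpart m k x S \<pi> * (\<Prod>i=1..Suc m. fac m x S \<pi> i (arr i))" for arr
  proof -
    have "(\<Prod>j\<in>S. Lf k \<pi> x arr j) = (\<Prod>j\<in>S. zz \<pi> x j powi k j) * (\<Prod>j\<in>S. if hasNE (arr j) then zz \<pi> x j else 1)"
      unfolding Lf_def by (simp add: prod.distrib)
    moreover have "(\<Prod>j\<in>{1..m} - S. - Uf k \<pi> x arr j) = (\<Prod>j\<in>{1..m} - S. - (zz \<pi> x j powi (k (Suc j) + 1))) * (\<Prod>j\<in>{1..m} - S. if hasNW (arr (Suc j)) then x / X (\<pi> j) else 1)"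
    proof -
      have "\<And>j. - Uf k \<pi> x arr j = (- (zz \<pi> x j powi (k (Suc j) + 1))) * (if hasNW (arr (Suc j)) then x / X (\<pi> j) else 1)"
        unfolding Uf_def by simp
      then show ?thesis by (simp only: prod.distrib)
    qed
    moreover have "(\<Prod>i=1..Suc m. fac m x S \<pi> i (arr i)) = (\<Prod>i=1..Suc m. wa x (arr i)) * (\<Prod>i=1..Suc m. if hasNE (arr i) \<and> i \<in> S then zz \<pi> x i else 1)
        * (\<Prod>i=1..Suc m. if hasNW (arr i) \<and> i - 1 \<in> {1..m} - S then x / X (\<pi> (i - 1)) else 1)"
      unfolding fac_def by (simp add: prod.distrib)
    ultimately show ?thesis unfolding Lpart_split[OF S] Apart[OF S] Bpart[OF S] by (simp add: ac_simps)
  qed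
  have "(\<Sum>arr\<in>Arr (Suc m). \<Prod>i=1..Suc m. fac m x S \<pi> i (arr i)) = (\<Prod>i=1..Suc m. \<Sum>a\<in>UNIV. fac m x S \<pi> i a)"
    unfolding Arr_def by (rule prod_sum_PiE[symmetric]) auto
  also have "\<dots> = (\<Prod>i=1..Suc m. qq m x S \<pi> i)" using fac_sum[OF x] by simp
  finally have s: "(\<Sum>arr\<in>Arr (Suc m). \<Prod>i=1..Suc m. fac m x S \<pi> i (arr i)) = (\<Prod>i=1..Suc m. qq m x S \<pi> i)" .
  show ?thesis by (simp only: e sum_distrib_left[symmetric] s)
qed

end

context amt_ctx begin

lemma pi_identity:
  assumes k: "\<And>j. j \<in> {1..m} \<Longrightarrow> k j < k (Suc j)" and p: "\<pi> permutes {1..m}"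
  shows "(\<Prod>i=1..m. X (Suc m) - X i) * (\<Sum>arr\<in>Arr (Suc m). \<Sum>l\<in>box (Suc m) k arr. bw (Suc m) k arr l * g m l \<pi>)
       = (\<Sum>S\<in>Pow {1..m}. Rt m k S \<pi>)"
proof -
  define x where "x = X (Suc m)"
  have x0: "x \<noteq> 0" unfolding x_def by simp
  define C0 where "C0 = Cp m \<pi> * x powi (\<Sum>j=1..Suc m. k j) * x ^ m * (\<Prod>j=1..m. X (\<pi> j) powi (int j - 1))"
  define W where "W arr = (\<Prod>i=1..Suc m. wa x (arr i))" for arr
  have perm: "(\<Prod>i=1..m. x - X i) = (\<Prod>j=1..m. x - X (\<pi> j))"
    using prod.permute[OF p, of "\<lambda>i. x - X i"] by (simp add: comp_def)
  have per_arr: "(\<Prod>i=1..m. x - X i) * (\<Sum>l\<in>box (Suc m) k arr. bw (Suc m) k arr l * g m l \<pi>)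
      = W arr * C0 * (\<Prod>j=1..m. Lf k \<pi> x arr j - Uf k \<pi> x arr j)" for arr
  proof -
    have "(\<Prod>j=1..m. x - X (\<pi> j)) * (\<Prod>j=1..m. X (\<pi> j) powi (int j - 1) * (\<Sum>t\<in>Ibox k arr j. (X (\<pi> j) / x) powi t))
        = (\<Prod>j=1..m. (x - X (\<pi> j)) * (X (\<pi> j) powi (int j - 1) * (\<Sum>t\<in>Ibox k arr j. (X (\<pi> j) / x) powi t)))"
      by (simp only: prod.distrib)
    also have "\<dots> = (\<Prod>j=1..m. x * X (\<pi> j) powi (int j - 1) * (Lf k \<pi> x arr j - Uf k \<pi> x arr j))"
      by (rule prod.cong[OF refl]) (rule geom_j[OF x0], auto intro: k)
    also have "\<dots> = x ^ m * (\<Prod>j=1..m. X (\<pi> j) powi (int j - 1)) * (\<Prod>j=1..m. Lf k \<pi> x arr j - Uf k \<pi> x arr j)"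
      by (simp add: prod.distrib)
    finally have e: "(\<Prod>j=1..m. x - X (\<pi> j)) * (\<Prod>j=1..m. X (\<pi> j) powi (int j - 1) * (\<Sum>t\<in>Ibox k arr j. (X (\<pi> j) / x) powi t))
        = x ^ m * (\<Prod>j=1..m. X (\<pi> j) powi (int j - 1)) * (\<Prod>j=1..m. Lf k \<pi> x arr j - Uf k \<pi> x arr j)" .
    show ?thesis unfolding lsum perm x_def[symmetric] W_def[symmetric] C0_def
      using e by (simp add: ac_simps)
  qed
  have expand: "(\<Prod>j=1..m. Lf k \<pi> x arr j - Uf k \<pi> x arr j)
      = (\<Sum>S\<in>Pow {1..m}. (\<Prod>j\<in>S. Lf k \<pi> x arr j) * (\<Prod>j\<in>{1..m} - S. - Uf k \<pi> x arr j))" for arr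
    using prod_add[of "{1..m}" "Lf k \<pi> x arr" "\<lambda>j. - Uf k \<pi> x arr j"] by simp
  have "(\<Prod>i=1..m. x - X i) * (\<Sum>arr\<in>Arr (Suc m). \<Sum>l\<in>box (Suc m) k arr. bw (Suc m) k arr l * g m l \<pi>)
      = (\<Sum>arr\<in>Arr (Suc m). (\<Prod>i=1..m. x - X i) * (\<Sum>l\<in>box (Suc m) k arr. bw (Suc m) k arr l * g m l \<pi>))"
    unfolding x_def by (rule sum_distrib_left)
  also have "\<dots> = (\<Sum>arr\<in>Arr (Suc m). W arr * C0 * (\<Prod>j=1..m. Lf k \<pi> x arr j - Uf k \<pi> x arr j))"
    by (rule sum.cong[OF refl]) (rule per_arr)
  also have "\<dots> = (\<Sum>arr\<in>Arr (Suc m). W arr * C0 * (\<Sum>S\<in>Pow {1..m}. (\<Prod>j\<in>S. Lf k \<pi> x arr j) * (\<Prod>j\<in>{1..m} - S. - Uf k \<pi> x arr j)))"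
    unfolding expand ..
  also have "\<dots> = C0 * (\<Sum>S\<in>Pow {1..m}. \<Sum>arr\<in>Arr (Suc m). W arr * ((\<Prod>j\<in>S. Lf k \<pi> x arr j) * (\<Prod>j\<in>{1..m} - S. - Uf k \<pi> x arr j)))"
    by (subst sum.swap) (simp add: sum_distrib_left ac_simps)
  also have "\<dots> = C0 * (\<Sum>S\<in>Pow {1..m}. Lpart m k x S \<pi> * (\<Prod>i=1..Suc m. qq m x S \<pi> i))"
  proof (intro arg_cong2[where f="(*)"] refl sum.cong)
    fix S assume "S \<in> Pow {1..m}"
    then have S: "S \<subseteq> {1..m}" by auto
    show "(\<Sum>arr\<in>Arr (Suc m). W arr * ((\<Prod>j\<in>S. Lf k \<pi> x arr j) * (\<Prod>j\<in>{1..m} - S. - Uf k \<pi> x arr j)))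
      = Lpart m k x S \<pi> * (\<Prod>i=1..Suc m. qq m x S \<pi> i)"
      unfolding W_def by (rule arr_S_sum[OF S x0])
  qed
  also have "\<dots> = (\<Sum>S\<in>Pow {1..m}. Rt m k S \<pi>)"
    unfolding sum_distrib_left Rt_def C0_def x_def by (simp add: ac_simps)
  finally show ?thesis unfolding x_def .
qed

end

lemma downclosed_interval:
  assumes S: "S \<subseteq> {1..m}" and dc: "\<And>j. 1 \<le> j \<Longrightarrow> Suc j \<le> m \<Longrightarrow> Suc j \<in> S \<Longrightarrow> j \<in> S"
  shows "\<exists>a\<in>{0..m}. S = {1..a}"
proof (cases "S = {}")
  case True then show ?thesis by (intro bexI[of _ 0]) auto
next
  case False
  have fin: "finite S" using S finite_subset by blast
  define a where "a = Max S"
  have aS: "a \<in> S" unfolding a_def using fin False by simp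
  have am: "a \<le> m" using aS S by auto
  have down: "\<forall>d. 1 \<le> a - d \<longrightarrow> a - d \<in> S"
  proof
    fix d show "1 \<le> a - d \<longrightarrow> a - d \<in> S"
    proof (induction d)
      case 0 then show ?case using aS by simp
    next
      case (Suc d)
      show ?case
      proof
        assume h: "1 \<le> a - Suc d"
        then have "Suc (a - Suc d) = a - d" by arith
        moreover have "a - d \<in> S" using Suc h by auto
        ultimately show "a - Suc d \<in> S" using dc[of "a - Suc d"] h am by auto
      qed
    qed
  qed
  have "S = {1..a}"
  proof
    show "S \<subseteq> {1..a}" using S fin a_def by auto
    show "{1..a} \<subseteq> S"
    proof
      fix i assume "i \<in> {1..a}"
      then show "i \<in> S" using down[rule_format, of "a - i"] by auto
    qed
  qed
  then show ?thesis using am by auto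
qed

context amt_ctx begin

lemma A1:
  assumes k: "\<And>j. j \<in> {1..m} \<Longrightarrow> k j < k (Suc j)"
  shows "(\<Prod>i=1..m. X (Suc m) - X i) * (\<Sum>arr\<in>Arr (Suc m). \<Sum>l\<in>box (Suc m) k arr. bw (Suc m) k arr l * G m l)
       = Q (X (Suc m)) (X (Suc m)) * G (Suc m) k"
proof -
  define P where "P = {\<pi>. \<pi> permutes {1..m}}"
  define J where "J = {1..m}"
  define Good where "Good = (\<lambda>a. {1..a}) ` {0..m}"
  define Bad where "Bad = Pow J - Good"
  have GB: "Pow J = Good \<union> Bad" "Good \<inter> Bad = {}" unfolding Good_def Bad_def J_def by auto
  have finJ: "finite (Pow J)" unfolding J_def by simp
  have "(\<Prod>i=1..m. X (Suc m) - X i) * (\<Sum>arr\<in>Arr (Suc m). \<Sum>l\<in>box (Suc m) k arr. bw (Suc m) k arr l * G m l)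
      = (\<Sum>\<pi>\<in>P. of_int (sign \<pi>) * ((\<Prod>i=1..m. X (Suc m) - X i) * (\<Sum>arr\<in>Arr (Suc m). \<Sum>l\<in>box (Suc m) k arr. bw (Suc m) k arr l * g m l \<pi>)))"
  proof -
    define F where "F \<pi> arr l = of_int (sign \<pi>) * ((\<Prod>i=1..m. X (Suc m) - X i) * (bw (Suc m) k arr l * g m l \<pi>))" for \<pi> arr l
    have "(\<Prod>i=1..m. X (Suc m) - X i) * (\<Sum>arr\<in>Arr (Suc m). \<Sum>l\<in>box (Suc m) k arr. bw (Suc m) k arr l * G m l)
        = (\<Sum>arr\<in>Arr (Suc m). \<Sum>l\<in>box (Suc m) k arr. \<Sum>\<pi>\<in>P. F \<pi> arr l)"
      unfolding G_def P_def F_def by (simp add: sum_distrib_left ac_simps)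
    also have "\<dots> = (\<Sum>arr\<in>Arr (Suc m). \<Sum>\<pi>\<in>P. \<Sum>l\<in>box (Suc m) k arr. F \<pi> arr l)"
      by (rule sum.cong[OF refl], rule sum.swap)
    also have "\<dots> = (\<Sum>\<pi>\<in>P. \<Sum>arr\<in>Arr (Suc m). \<Sum>l\<in>box (Suc m) k arr. F \<pi> arr l)"
      by (rule sum.swap)
    also have "\<dots> = (\<Sum>\<pi>\<in>P. of_int (sign \<pi>) * ((\<Prod>i=1..m. X (Suc m) - X i) * (\<Sum>arr\<in>Arr (Suc m). \<Sum>l\<in>box (Suc m) k arr. bw (Suc m) k arr l * g m l \<pi>)))"
      unfolding F_def by (simp add: sum_distrib_left)
    finally show ?thesis .
  qed
  also have "\<dots> = (\<Sum>\<pi>\<in>P. of_int (sign \<pi>) * (\<Sum>S\<in>Pow J. Rt m k S \<pi>))"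
  proof (rule sum.cong[OF refl])
    fix \<pi> assume "\<pi> \<in> P"
    then have p: "\<pi> permutes {1..m}" unfolding P_def by simp
    show "of_int (sign \<pi>) * ((\<Prod>i=1..m. X (Suc m) - X i) * (\<Sum>arr\<in>Arr (Suc m). \<Sum>l\<in>box (Suc m) k arr. bw (Suc m) k arr l * g m l \<pi>))
        = of_int (sign \<pi>) * (\<Sum>S\<in>Pow J. Rt m k S \<pi>)"
      using pi_identity[of m k \<pi>, OF k p] unfolding J_def by metis
  qed
  also have "\<dots> = (\<Sum>S\<in>Pow J. \<Sum>\<pi>\<in>P. of_int (sign \<pi>) * Rt m k S \<pi>)"
    by (simp add: sum_distrib_left sum.swap[of _ P])
  also have "\<dots> = (\<Sum>S\<in>Good. \<Sum>\<pi>\<in>P. of_int (sign \<pi>) * Rt m k S \<pi>) + (\<Sum>S\<in>Bad. \<Sum>\<pi>\<in>P. of_int (sign \<pi>) * Rt m k S \<pi>)"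
    using GB finJ by (simp add: sum.union_disjoint)
  also have "(\<Sum>S\<in>Bad. \<Sum>\<pi>\<in>P. of_int (sign \<pi>) * Rt m k S \<pi>) = 0"
  proof (rule sum.neutral, rule ballI)
    fix S assume "S \<in> Bad"
    then have S: "S \<subseteq> {1..m}" and ng: "\<not> (\<exists>a\<in>{0..m}. S = {1..a})" unfolding Bad_def Good_def J_def by auto
    obtain j where j: "1 \<le> j" "Suc j \<le> m" "Suc j \<in> S" "j \<notin> S"
      using downclosed_interval[OF S] ng by blast
    show "(\<Sum>\<pi>\<in>P. of_int (sign \<pi>) * Rt m k S \<pi>) = 0"
      unfolding P_def using Rt_bad_zero[OF j(1,2,4,3)] by simp
  qed
  also have "(\<Sum>S\<in>Good. \<Sum>\<pi>\<in>P. of_int (sign \<pi>) * Rt m k S \<pi>) = (\<Sum>a=0..m. \<Sum>\<pi>\<in>P. of_int (sign \<pi>) * Rt m k {1..a} \<pi>)"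
  proof -
    have "inj_on (\<lambda>a. {1..a::nat}) {0..m}"
    proof (rule inj_onI)
      fix a b :: nat assume "{1..a} = {1..b}" then have "card {1..a} = card {1..b}" by (rule arg_cong)
      then show "a = b" unfolding card_atLeastAtMost by simp
    qed
    then show ?thesis unfolding Good_def by (simp add: sum.reindex)
  qed
  also have "\<dots> = (\<Sum>a=0..m. \<Sum>\<pi>\<in>P. (-1) ^ (m - a) * (of_int (sign \<pi>) * (Q (X (Suc m)) (X (Suc m)) * g (Suc m) k (\<pi> \<circ> sh m a))))"
  proof (intro sum.cong refl)
    fix a \<pi> assume a: "a \<in> {0..m}" and p: "\<pi> \<in> P"
    have "Rt m k {1..a} \<pi> = (-1) ^ (m - a) * (Q (X (Suc m)) (X (Suc m)) * g (Suc m) k (\<pi> \<circ> sh m a))"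
      using a p unfolding P_def by (intro Rt_good) auto
    then show "of_int (sign \<pi>) * Rt m k {1..a} \<pi> = (-1) ^ (m - a) * (of_int (sign \<pi>) * (Q (X (Suc m)) (X (Suc m)) * g (Suc m) k (\<pi> \<circ> sh m a)))"
      by (simp add: ac_simps)
  qed
  also have "\<dots> = Q (X (Suc m)) (X (Suc m)) * G (Suc m) k"
    unfolding G_def perm_insert_decomp P_def by (simp add: sum_distrib_left ac_simps)
  finally show ?thesis by simp
qed

end

definition AMT :: "nat \<Rightarrow> (nat \<Rightarrow> int) \<Rightarrow> ((nat \<Rightarrow> nat \<Rightarrow> int) \<times> (nat \<Rightarrow> nat \<Rightarrow> arrow)) set" where
  "AMT n k = {(m, d).
     (\<forall>i j. \<not> in_tri n i j \<longrightarrow> m i j = 0 \<and> d i j = NW) \<and>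
     monotone_triangle n m \<and>
     (\<forall>j. 1 \<le> j \<and> j \<le> n \<longrightarrow> m n j = k j) \<and>
     (\<forall>i j. in_tri n i j \<and> 2 \<le> j \<and> m i j = m (i-1) (j-1) \<longrightarrow> d i j = NE) \<and>
     (\<forall>i j. in_tri n i j \<and> j < i \<and> m i j = m (i-1) j \<longrightarrow> d i j = NW)}"

lemma arrowed_MT_AMT: "arrowed_MT n = AMT n (\<lambda>j. int j)"
  unfolding arrowed_MT_def AMT_def by simp

definition comb :: "nat \<Rightarrow> (nat \<Rightarrow> int) \<Rightarrow> (nat \<Rightarrow> arrow) \<Rightarrow> (nat \<Rightarrow> nat \<Rightarrow> int) \<times> (nat \<Rightarrow> nat \<Rightarrow> arrow)
    \<Rightarrow> (nat \<Rightarrow> nat \<Rightarrow> int) \<times> (nat \<Rightarrow> nat \<Rightarrow> arrow)" where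
  "comb N k arr t = ((\<lambda>i j. if i = N \<and> 1 \<le> j \<and> j \<le> N then k j else fst t i j),
                     (\<lambda>i j. if i = N \<and> 1 \<le> j \<and> j \<le> N then arr j else snd t i j))"

lemma AMT_D:
  assumes "(m, d) \<in> AMT n k"
  shows "\<And>i j. \<not> in_tri n i j \<Longrightarrow> m i j = 0"
    and "\<And>i j. \<not> in_tri n i j \<Longrightarrow> d i j = NW"
    and "\<And>i j. 1 \<le> j \<Longrightarrow> j \<le> i \<Longrightarrow> i < n \<Longrightarrow> m (i+1) j \<le> m i j"
    and "\<And>i j. 1 \<le> j \<Longrightarrow> j \<le> i \<Longrightarrow> i < n \<Longrightarrow> m i j \<le> m (i+1) (j+1)"
    and "\<And>i j. 1 \<le> j \<Longrightarrow> j < i \<Longrightarrow> i \<le> n \<Longrightarrow> m i j < m i (j+1)"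
    and "\<And>j. 1 \<le> j \<Longrightarrow> j \<le> n \<Longrightarrow> m n j = k j"
    and "\<And>i j. in_tri n i j \<Longrightarrow> 2 \<le> j \<Longrightarrow> m i j = m (i-1) (j-1) \<Longrightarrow> d i j = NE"
    and "\<And>i j. in_tri n i j \<Longrightarrow> j < i \<Longrightarrow> m i j = m (i-1) j \<Longrightarrow> d i j = NW"
  using assms unfolding AMT_def monotone_triangle_def by auto

lemma AMT_I:
  assumes "\<And>i j. \<not> in_tri n i j \<Longrightarrow> m i j = 0"
    and "\<And>i j. \<not> in_tri n i j \<Longrightarrow> d i j = NW"
    and "\<And>i j. 1 \<le> j \<Longrightarrow> j \<le> i \<Longrightarrow> i < n \<Longrightarrow> m (i+1) j \<le> m i j"
    and "\<And>i j. 1 \<le> j \<Longrightarrow> j \<le> i \<Longrightarrow> i < n \<Longrightarrow> m i j \<le> m (i+1) (j+1)"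
    and "\<And>i j. 1 \<le> j \<Longrightarrow> j < i \<Longrightarrow> i \<le> n \<Longrightarrow> m i j < m i (j+1)"
    and "\<And>j. 1 \<le> j \<Longrightarrow> j \<le> n \<Longrightarrow> m n j = k j"
    and "\<And>i j. in_tri n i j \<Longrightarrow> 2 \<le> j \<Longrightarrow> m i j = m (i-1) (j-1) \<Longrightarrow> d i j = NE"
    and "\<And>i j. in_tri n i j \<Longrightarrow> j < i \<Longrightarrow> m i j = m (i-1) j \<Longrightarrow> d i j = NW"
  shows "(m, d) \<in> AMT n k"
  using assms unfolding AMT_def monotone_triangle_def by auto

lemma AMT_strict:
  assumes "(m, d) \<in> AMT n k" "1 \<le> j" "j < n"
  shows "k j < k (Suc j)"
  using AMT_D(5)[OF assms(1), of j n] AMT_D(6)[OF assms(1), of j] AMT_D(6)[OF assms(1), of "Suc j"] assms(2,3)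
  by simp

context amt_ctx begin

definition SS :: "nat \<Rightarrow> (nat \<Rightarrow> int) \<Rightarrow> ((nat \<Rightarrow> arrow) \<times> (nat \<Rightarrow> int) \<times> ((nat \<Rightarrow> nat \<Rightarrow> int) \<times> (nat \<Rightarrow> nat \<Rightarrow> arrow))) set" where
  "SS N k = Sigma (Arr N) (\<lambda>arr. Sigma (box N k arr) (\<lambda>l. AMT (N - 1) l))"

lemma comb_mem:
  assumes k: "\<And>j. 1 \<le> j \<Longrightarrow> j < Suc m \<Longrightarrow> k j < k (Suc j)"
    and arr: "arr \<in> Arr (Suc m)" and l: "l \<in> box (Suc m) k arr" and t: "t \<in> AMT m l"
  shows "comb (Suc m) k arr t \<in> AMT (Suc m) k"
proof -
  obtain m1 d1 where t': "t = (m1, d1)" by (cases t)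
  note T = AMT_D[OF t[unfolded t']]
  have lb: "\<And>j. j \<in> {1..m} \<Longrightarrow> k j + ne (arr j) \<le> l j \<and> l j \<le> k (Suc j) - nw (arr (Suc j))"
    using l unfolding box_def Ibox_def by (auto simp: PiE_iff)
  have ne0: "ne a \<ge> 0" "nw a \<ge> 0" for a unfolding ne_def nw_def by auto
  define M where "M = fst (comb (Suc m) k arr t)"
  define D where "D = snd (comb (Suc m) k arr t)"
  have Mdef: "M i j = (if i = Suc m \<and> 1 \<le> j \<and> j \<le> Suc m then k j else m1 i j)" for i j
    unfolding M_def comb_def t' by simp
  have Ddef: "D i j = (if i = Suc m \<and> 1 \<le> j \<and> j \<le> Suc m then arr j else d1 i j)" for i j
    unfolding D_def comb_def t' by simp
  have intri: "in_tri m i j \<Longrightarrow> in_tri (Suc m) i j" for i j unfolding in_tri_def by auto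
  have intri2: "in_tri (Suc m) i j \<Longrightarrow> i \<noteq> Suc m \<Longrightarrow> in_tri m i j" for i j unfolding in_tri_def by auto
  have "(M, D) \<in> AMT (Suc m) k"
  proof (rule AMT_I)
    fix i j assume h: "\<not> in_tri (Suc m) i j"
    then have "\<not> in_tri m i j" using intri by blast
    moreover have "\<not> (i = Suc m \<and> 1 \<le> j \<and> j \<le> Suc m)" using h unfolding in_tri_def by auto
    ultimately show "M i j = 0" "D i j = NW" unfolding Mdef Ddef using T(1,2) by auto
  next
    fix i j assume h: "1 \<le> j" "j \<le> i" "i < Suc m"
    show "M (i+1) j \<le> M i j"
    proof (cases "i = m")
      case True
      then show ?thesis using h lb[of j] ne0(1)[of "arr j"] ne0(2)[of "arr (Suc j)"] T(6)[of j] unfolding Mdef by auto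
    next
      case False
      then show ?thesis using h T(3)[of j i] unfolding Mdef by auto
    qed
    show "M i j \<le> M (i+1) (j+1)"
    proof (cases "i = m")
      case True
      then show ?thesis using h lb[of j] ne0(1)[of "arr j"] ne0(2)[of "arr (Suc j)"] T(6)[of j] unfolding Mdef by auto
    next
      case False
      then show ?thesis using h T(4)[of j i] unfolding Mdef by auto
    qed
  next
    fix i j assume h: "1 \<le> j" "j < i" "i \<le> Suc m"
    show "M i j < M i (j+1)"
    proof (cases "i = Suc m")
      case True
      then show ?thesis using h k[of j] unfolding Mdef by auto
    next
      case False
      then show ?thesis using h T(5)[of j i] unfolding Mdef by auto
    qed
  next
    fix j assume "1 \<le> j" "j \<le> Suc m"
    then show "M (Suc m) j = k j" unfolding Mdef by auto
  next
    fix i j assume h: "in_tri (Suc m) i j" "2 \<le> j" "M i j = M (i-1) (j-1)"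
    show "D i j = NE"
    proof (cases "i = Suc m")
      case True
      have j: "1 \<le> j - 1" "j - 1 \<le> m" "j \<le> Suc m" "1 \<le> j" using h True unfolding in_tri_def by auto
      have "k j = l (j - 1)" using h(3) True j T(6)[of "j - 1"] unfolding Mdef by auto
      moreover have "l (j - 1) \<le> k j - nw (arr j)" using lb[of "j - 1"] j by (simp add: Suc_diff_1)
      ultimately have "nw (arr j) = 0" using ne0(2)[of "arr j"] by auto
      then have "arr j = NE" unfolding nw_def by (cases "arr j") auto
      then show ?thesis unfolding Ddef using True j by auto
    next
      case False
      have it: "in_tri m i j" using intri2[OF h(1) False] .
      have "m1 i j = m1 (i-1) (j-1)" using h(3) False it unfolding Mdef in_tri_def by auto
      then show ?thesis using T(7)[OF it h(2)] False unfolding Ddef by auto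
    qed
  next
    fix i j assume h: "in_tri (Suc m) i j" "j < i" "M i j = M (i-1) j"
    show "D i j = NW"
    proof (cases "i = Suc m")
      case True
      have j: "1 \<le> j" "j \<le> m" using h True unfolding in_tri_def by auto
      have "k j = l j" using h(3) True j T(6)[of j] unfolding Mdef by auto
      moreover have "k j + ne (arr j) \<le> l j" using lb[of j] j by simp
      ultimately have "ne (arr j) = 0" using ne0(1)[of "arr j"] by auto
      then have "arr j = NW" unfolding ne_def by (cases "arr j") auto
      then show ?thesis unfolding Ddef using True j by auto
    next
      case False
      have it: "in_tri m i j" using intri2[OF h(1) False] .
      have "m1 i j = m1 (i-1) j" using h(3) False h(2) it unfolding Mdef in_tri_def by auto
      then show ?thesis using T(8)[OF it h(2)] False unfolding Ddef by auto
    qed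
  qed
  then show ?thesis unfolding M_def D_def by simp
qed

end

context amt_ctx begin

lemma comb_surj:
  assumes MD: "(M, D) \<in> AMT (Suc m) k"
  defines "arr \<equiv> restrict (D (Suc m)) {1..Suc m}"
    and "l \<equiv> restrict (M m) {1..m}"
    and "t \<equiv> ((\<lambda>i j. if i = Suc m then 0 else M i j), (\<lambda>i j. if i = Suc m then NW else D i j))"
  shows "arr \<in> Arr (Suc m)" "l \<in> box (Suc m) k arr" "t \<in> AMT m l" "comb (Suc m) k arr t = (M, D)"
proof -
  note T = AMT_D[OF MD]
  show "arr \<in> Arr (Suc m)" unfolding arr_def Arr_def by auto
  show "l \<in> box (Suc m) k arr"
    unfolding box_def diff_Suc_1
  proof (rule PiE_I)
    fix j assume j: "j \<in> {1..m}"
    have a1: "k j \<le> M m j" using T(3)[of j m] T(6)[of j] j by auto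
    have a2: "M m j \<le> k (Suc j)" using T(4)[of j m] T(6)[of "Suc j"] j by auto
    have a3: "M m j \<noteq> k j" if "hasNE (D (Suc m) j)"
    proof
      assume e: "M m j = k j"
      have "D (Suc m) j = NW" using T(8)[of "Suc m" j] T(6)[of j] e j unfolding in_tri_def by auto
      then show False using that by simp
    qed
    have a4: "M m j \<noteq> k (Suc j)" if "hasNW (D (Suc m) (Suc j))"
    proof
      assume e: "M m j = k (Suc j)"
      have "D (Suc m) (Suc j) = NE" using T(7)[of "Suc m" "Suc j"] T(6)[of "Suc j"] e j unfolding in_tri_def by auto
      then show False using that by simp
    qed
    show "l j \<in> Ibox k arr j"
      unfolding Ibox_def l_def arr_def ne_def nw_def using j a1 a2 a3 a4 by auto
  next
    fix j assume "j \<notin> {1..m}" then show "l j = undefined" unfolding l_def by auto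
  qed
  show "t \<in> AMT m l"
    unfolding t_def
  proof (rule AMT_I)
    fix i j assume h: "\<not> in_tri m i j"
    show "(if i = Suc m then 0 else M i j) = 0" "(if i = Suc m then NW else D i j) = NW"
      using h T(1)[of i j] T(2)[of i j] unfolding in_tri_def by auto
  next
    fix i j assume "1 \<le> j" "j \<le> i" "i < m"
    then show "(if i + 1 = Suc m then 0 else M (i + 1) j) \<le> (if i = Suc m then 0 else M i j)"
      "(if i = Suc m then 0 else M i j) \<le> (if i + 1 = Suc m then 0 else M (i + 1) (j + 1))"
      using T(3)[of j i] T(4)[of j i] by auto
  next
    fix i j assume "1 \<le> j" "j < i" "i \<le> m"
    then show "(if i = Suc m then 0 else M i j) < (if i = Suc m then 0 else M i (j + 1))"
      using T(5)[of j i] by auto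
  next
    fix j assume "1 \<le> j" "j \<le> m"
    then show "(if m = Suc m then 0 else M m j) = l j" unfolding l_def by auto
  next
    fix i j assume h: "in_tri m i j" "2 \<le> j" "(if i = Suc m then 0 else M i j) = (if i - 1 = Suc m then 0 else M (i - 1) (j - 1))"
    then show "(if i = Suc m then NW else D i j) = NE"
      using T(7)[of i j] unfolding in_tri_def by auto
  next
    fix i j assume h: "in_tri m i j" "j < i" "(if i = Suc m then 0 else M i j) = (if i - 1 = Suc m then 0 else M (i - 1) j)"
    then show "(if i = Suc m then NW else D i j) = NW"
      using T(8)[of i j] unfolding in_tri_def by auto
  qed
  have f: "fst (comb (Suc m) k arr t) i j = M i j" for i j
    using T(6)[of j] T(1)[of i j] unfolding in_tri_def comb_def t_def arr_def by auto
  have g: "snd (comb (Suc m) k arr t) i j = D i j" for i j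
    using T(2)[of i j] unfolding in_tri_def comb_def t_def arr_def by auto
  show "comb (Suc m) k arr t = (M, D)"
    using f g by (simp add: prod_eq_iff fun_eq_iff)
qed

lemma comb_inj:
  assumes x: "x \<in> SS (Suc m) k" and y: "y \<in> SS (Suc m) k"
    and e: "(\<lambda>(arr, l, t). comb (Suc m) k arr t) x = (\<lambda>(arr, l, t). comb (Suc m) k arr t) y"
  shows "x = y"
proof -
  obtain arr l m1 d1 where xx: "x = (arr, l, (m1, d1))" by (cases x) auto
  obtain arr' l' m1' d1' where yy: "y = (arr', l', (m1', d1'))" by (cases y) auto
  have a: "arr \<in> Arr (Suc m)" "l \<in> box (Suc m) k arr" "(m1, d1) \<in> AMT m l" using x unfolding xx SS_def by auto
  have b: "arr' \<in> Arr (Suc m)" "l' \<in> box (Suc m) k arr'" "(m1', d1') \<in> AMT m l'" using y unfolding yy SS_def by auto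
  have e': "comb (Suc m) k arr (m1, d1) = comb (Suc m) k arr' (m1', d1')" using e unfolding xx yy by simp
  have M: "m1 i j = m1' i j" if "i \<noteq> Suc m" for i j
  proof -
    have "fst (comb (Suc m) k arr (m1, d1)) i j = fst (comb (Suc m) k arr' (m1', d1')) i j" using e' by simp
    then show ?thesis using that by (simp add: comb_def)
  qed
  have D: "d1 i j = d1' i j" if "i \<noteq> Suc m" for i j
  proof -
    have "snd (comb (Suc m) k arr (m1, d1)) i j = snd (comb (Suc m) k arr' (m1', d1')) i j" using e' by simp
    then show ?thesis using that by (simp add: comb_def)
  qed
  have Da: "arr j = arr' j" if "j \<in> {1..Suc m}" for j
  proof -
    have "snd (comb (Suc m) k arr (m1, d1)) (Suc m) j = snd (comb (Suc m) k arr' (m1', d1')) (Suc m) j" using e' by simp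
    then show ?thesis using that by (simp add: comb_def)
  qed
  have "arr = arr'"
  proof (rule ext)
    fix j show "arr j = arr' j"
    proof (cases "j \<in> {1..Suc m}")
      case True then show ?thesis using Da[of j] by auto
    next
      case False then show ?thesis using a(1) b(1) unfolding Arr_def by (auto simp: PiE_def extensional_def)
    qed
  qed
  moreover have m1: "m1 = m1'"
  proof (intro ext)
    fix i j show "m1 i j = m1' i j"
    proof (cases "i = Suc m")
      case True
      then have "\<not> in_tri m i j" unfolding in_tri_def by auto
      then show ?thesis using AMT_D(1)[OF a(3)] AMT_D(1)[OF b(3)] by simp
    next
      case False then show ?thesis using M[of i j] by auto
    qed
  qed
  moreover have "d1 = d1'"
  proof (intro ext)
    fix i j show "d1 i j = d1' i j"
    proof (cases "i = Suc m")
      case True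
      then have "\<not> in_tri m i j" unfolding in_tri_def by auto
      then show ?thesis using AMT_D(2)[OF a(3)] AMT_D(2)[OF b(3)] by simp
    next
      case False then show ?thesis using D[of i j] by auto
    qed
  qed
  moreover have "l = l'"
  proof (rule ext)
    fix j show "l j = l' j"
    proof (cases "j \<in> {1..m}")
      case True then show ?thesis using AMT_D(6)[OF a(3), of j] AMT_D(6)[OF b(3), of j] m1 by auto
    next
      case False then show ?thesis using a(2) b(2) unfolding box_def by (auto simp: PiE_def extensional_def)
    qed
  qed
  ultimately show ?thesis unfolding xx yy by simp
qed

lemma comb_image:
  assumes k: "\<And>j. 1 \<le> j \<Longrightarrow> j < Suc m \<Longrightarrow> k j < k (Suc j)"
  shows "(\<lambda>(arr, l, t). comb (Suc m) k arr t) ` SS (Suc m) k = AMT (Suc m) k"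
proof
  show "(\<lambda>(arr, l, t). comb (Suc m) k arr t) ` SS (Suc m) k \<subseteq> AMT (Suc m) k"
    using comb_mem[where k=k and m=m, OF k] unfolding SS_def by auto
  show "AMT (Suc m) k \<subseteq> (\<lambda>(arr, l, t). comb (Suc m) k arr t) ` SS (Suc m) k"
  proof
    fix MD assume h: "MD \<in> AMT (Suc m) k"
    obtain M D where MD: "MD = (M, D)" by (cases MD)
    note s = comb_surj[OF h[unfolded MD]]
    define x0 where "x0 = (restrict (D (Suc m)) {1..Suc m}, restrict (M m) {1..m},
       ((\<lambda>i j. if i = Suc m then 0 else M i j), (\<lambda>i j. if i = Suc m then NW else D i j)))"
    have mem: "x0 \<in> SS (Suc m) k" unfolding x0_def SS_def using s(1-3) by auto
    have eq: "MD = (\<lambda>(arr, l, t). comb (Suc m) k arr t) x0" unfolding x0_def MD using s(4) by simp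
    show "MD \<in> (\<lambda>(arr, l, t). comb (Suc m) k arr t) ` SS (Suc m) k"
      using eq mem by blast
  qed
qed

end

lemma prod_if_const: "finite A \<Longrightarrow> (\<Prod>i\<in>A. if P i then c else 1) = c ^ card {i\<in>A. P i}"
proof -
  assume fin: "finite A"
  have "(\<Prod>i\<in>A. if P i then c else 1) = (\<Prod>i\<in>A \<inter> {i. P i}. c) * (\<Prod>i\<in>A \<inter> - {i. P i}. 1)"
    by (rule prod.If_cases[OF fin])
  also have "A \<inter> {i. P i} = {i\<in>A. P i}" by auto
  finally show ?thesis by simp
qed

context amt_ctx begin

lemma wa_prod:
  assumes x: "x \<noteq> 0" and fin: "finite A"
  shows "(\<Prod>i\<in>A. wa x (arr i)) = u ^ card {i\<in>A. arr i = NE} * v ^ card {i\<in>A. arr i = NW} * w ^ card {i\<in>A. arr i = NWNE}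
          * x powi (int (card {i\<in>A. arr i = NE}) - int (card {i\<in>A. arr i = NW}))"
proof -
  have "wa x a = (if a = NE then u * x else 1) * (if a = NW then v / x else 1) * (if a = NWNE then w else 1)" for a
    unfolding wa_def by (cases a) auto
  then have "(\<Prod>i\<in>A. wa x (arr i)) = (\<Prod>i\<in>A. if arr i = NE then u * x else 1) * (\<Prod>i\<in>A. if arr i = NW then v / x else 1)
      * (\<Prod>i\<in>A. if arr i = NWNE then w else 1)"
    by (simp add: prod.distrib)
  also have "\<dots> = (u * x) ^ card {i\<in>A. arr i = NE} * (v / x) ^ card {i\<in>A. arr i = NW} * w ^ card {i\<in>A. arr i = NWNE}"
    using fin by (simp add: prod_if_const)
  finally show ?thesis using x by (simp add: power_mult_distrib power_divide power_int_diff)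
qed

lemma weight_comb:
  assumes xs: "(arr, l, t) \<in> SS (Suc m) k"
  shows "amt_weight (Suc m) u v w X (comb (Suc m) k arr t) = bw (Suc m) k arr l * amt_weight m u v w X t"
proof -
  obtain m1 d1 where t': "t = (m1, d1)" by (cases t)
  have tm: "(m1, d1) \<in> AMT m l" using xs unfolding SS_def t' by auto
  define M where "M = fst (comb (Suc m) k arr t)"
  define D where "D = snd (comb (Suc m) k arr t)"
  have c: "comb (Suc m) k arr t = (M, D)" unfolding M_def D_def by simp
  have Mi: "i \<noteq> Suc m \<Longrightarrow> M i j = m1 i j" for i j unfolding M_def comb_def t' by simp
  have Di: "i \<noteq> Suc m \<Longrightarrow> D i j = d1 i j" for i j unfolding D_def comb_def t' by simp
  have MN: "j \<in> {1..Suc m} \<Longrightarrow> M (Suc m) j = k j" for j unfolding M_def comb_def t' by simp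
  have DN: "j \<in> {1..Suc m} \<Longrightarrow> D (Suc m) j = arr j" for j unfolding D_def comb_def t' by simp
  have rc: "i \<le> m \<Longrightarrow> row_count D i a = row_count d1 i a" for i a
    unfolding row_count_def using Di by (metis (no_types, lifting) Suc_n_not_le_n)
  have rcN: "row_count D (Suc m) a = card {j\<in>{1..Suc m}. arr j = a}" for a
    unfolding row_count_def using DN by (metis (no_types, lifting))
  have rs: "i \<le> m \<Longrightarrow> row_sum M i = row_sum m1 i" for i
    unfolding row_sum_def using Mi by (metis (no_types, lifting) Suc_n_not_le_n sum.cong)
  have rsN: "row_sum M (Suc m) = (\<Sum>j=1..Suc m. k j)" unfolding row_sum_def using MN by simp
  have rsl: "row_sum m1 m = (\<Sum>j=1..m. l j)" unfolding row_sum_def using AMT_D(6)[OF tm] by simp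
  have tc: "total_count (Suc m) D a = total_count m d1 a + row_count D (Suc m) a" for a
    unfolding total_count_def using rc by simp
  define cNE where "cNE = card {j\<in>{1..Suc m}. arr j = NE}"
  define cNW where "cNW = card {j\<in>{1..Suc m}. arr j = NW}"
  define cB where "cB = card {j\<in>{1..Suc m}. arr j = NWNE}"
  define x where "x = X (Suc m)"
  have pr: "(\<Prod>i=1..Suc m. X i powi (row_sum M i - row_sum M (i - 1) + int (row_count D i NE) - int (row_count D i NW)))
      = (\<Prod>i=1..m. X i powi (row_sum m1 i - row_sum m1 (i - 1) + int (row_count d1 i NE) - int (row_count d1 i NW)))
        * x powi ((\<Sum>j=1..Suc m. k j) - (\<Sum>j=1..m. l j) + int cNE - int cNW)"
  proof -
    have "(\<Prod>i=1..m. X i powi (row_sum M i - row_sum M (i - 1) + int (row_count D i NE) - int (row_count D i NW)))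
        = (\<Prod>i=1..m. X i powi (row_sum m1 i - row_sum m1 (i - 1) + int (row_count d1 i NE) - int (row_count d1 i NW)))"
    proof (rule prod.cong[OF refl])
      fix i assume "i \<in> {1..m}"
      then have "i \<le> m" "i - 1 \<le> m" by auto
      then show "X i powi (row_sum M i - row_sum M (i - 1) + int (row_count D i NE) - int (row_count D i NW))
        = X i powi (row_sum m1 i - row_sum m1 (i - 1) + int (row_count d1 i NE) - int (row_count d1 i NW))"
        by (simp add: rs rc)
    qed
    then show ?thesis
      by (simp add: rs rsN rsl rcN cNE_def cNW_def x_def)
  qed
  have bwe: "bw (Suc m) k arr l = u ^ cNE * v ^ cNW * w ^ cB * x powi (int cNE - int cNW) * x powi ((\<Sum>j=1..Suc m. k j) - (\<Sum>j=1..m. l j))"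
    unfolding bw_def x_def[symmetric] wa_prod[of x "{1..Suc m}" arr, OF Xnz[of "Suc m", folded x_def] finite_atLeastAtMost]
    cNE_def cNW_def cB_def by simp
  have xe: "x powi ((\<Sum>j=1..Suc m. k j) - (\<Sum>j=1..m. l j) + int cNE - int cNW) = x powi (int cNE - int cNW) * x powi ((\<Sum>j=1..Suc m. k j) - (\<Sum>j=1..m. l j))"
    unfolding x_def by (simp add: power_int_add[symmetric] algebra_simps)
  define PR1 where "PR1 = (\<Prod>i=1..m. X i powi (row_sum m1 i - row_sum m1 (i - 1) + int (row_count d1 i NE) - int (row_count d1 i NW)))"
  have W1: "amt_weight (Suc m) u v w X (M, D) = u ^ (total_count m d1 NE + cNE) * v ^ (total_count m d1 NW + cNW)
      * w ^ (total_count m d1 NWNE + cB) * (PR1 * x powi ((\<Sum>j=1..Suc m. k j) - (\<Sum>j=1..m. l j) + int cNE - int cNW))"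
    unfolding amt_weight_def prod.case tc rcN pr cNE_def[symmetric] cNW_def[symmetric] cB_def[symmetric] PR1_def ..
  have W2: "amt_weight m u v w X (m1, d1) = u ^ total_count m d1 NE * v ^ total_count m d1 NW * w ^ total_count m d1 NWNE * PR1"
    unfolding amt_weight_def prod.case PR1_def ..
  show ?thesis
    unfolding c unfolding t' W1 W2 bwe xe by (simp only: power_add mult_ac)
qed

lemma finite_box: "finite (box n k arr)"
  unfolding box_def Ibox_def by (rule finite_PiE) auto

lemma finite_Arr: "finite (Arr n)"
  unfolding Arr_def by (rule finite_PiE) auto

lemma AMT_0: "AMT 0 k = {(\<lambda>_ _. 0, \<lambda>_ _. NW)}"
proof
  show "AMT 0 k \<subseteq> {(\<lambda>_ _. 0, \<lambda>_ _. NW)}"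
  proof
    fix t assume "t \<in> AMT 0 k"
    moreover obtain m1 d1 where "t = (m1, d1)" by (cases t)
    ultimately have "m1 = (\<lambda>_ _. 0)" "d1 = (\<lambda>_ _. NW)"
      using AMT_D(1,2)[of m1 d1 0 k] unfolding in_tri_def by (auto simp: fun_eq_iff)
    then show "t \<in> {(\<lambda>_ _. 0, \<lambda>_ _. NW)}" using \<open>t = (m1, d1)\<close> by simp
  qed
  show "{(\<lambda>_ _. 0, \<lambda>_ _. NW)} \<subseteq> AMT 0 k"
    by (auto intro!: AMT_I simp: in_tri_def)
qed

lemma finite_AMT: "finite (AMT n k)"
proof (induction n arbitrary: k)
  case 0 then show ?case by (simp add: AMT_0)
next
  case (Suc m)
  show ?case
  proof (cases "\<forall>j. 1 \<le> j \<longrightarrow> j < Suc m \<longrightarrow> k j < k (Suc j)")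
    case True
    have "finite (SS (Suc m) k)" unfolding SS_def
      using Suc finite_box finite_Arr by (auto intro!: finite_SigmaI)
    then show ?thesis using comb_image[of m k] True by (metis finite_imageI)
  next
    case False
    have "AMT (Suc m) k = {}"
    proof (rule ccontr)
      assume "AMT (Suc m) k \<noteq> {}"
      then obtain m1 d1 where "(m1, d1) \<in> AMT (Suc m) k" by auto
      then have "\<forall>j. 1 \<le> j \<longrightarrow> j < Suc m \<longrightarrow> k j < k (Suc j)" using AMT_strict by blast
      then show False using False by blast
    qed
    then show ?thesis by simp
  qed
qed

lemma C_sum:
  assumes k: "\<And>j. 1 \<le> j \<Longrightarrow> j < Suc m \<Longrightarrow> k j < k (Suc j)"
  shows "(\<Sum>t\<in>AMT (Suc m) k. amt_weight (Suc m) u v w X t)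
     = (\<Sum>arr\<in>Arr (Suc m). \<Sum>l\<in>box (Suc m) k arr. bw (Suc m) k arr l * (\<Sum>t\<in>AMT m l. amt_weight m u v w X t))"
proof -
  define h :: "(nat \<Rightarrow> arrow) \<times> (nat \<Rightarrow> int) \<times> ((nat \<Rightarrow> nat \<Rightarrow> int) \<times> (nat \<Rightarrow> nat \<Rightarrow> arrow)) \<Rightarrow> _"
    where "h = (\<lambda>(arr, l, t). comb (Suc m) k arr t)"
  have inj: "inj_on h (SS (Suc m) k)" unfolding h_def using comb_inj by (intro inj_onI) blast
  have "(\<Sum>t\<in>AMT (Suc m) k. amt_weight (Suc m) u v w X t) = (\<Sum>x\<in>SS (Suc m) k. amt_weight (Suc m) u v w X (h x))"
    using sum.reindex[OF inj, of "amt_weight (Suc m) u v w X"] comb_image[where k=k and m=m, OF k] unfolding h_def by simp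
  also have "\<dots> = (\<Sum>x\<in>SS (Suc m) k. (\<lambda>(arr, l, t). bw (Suc m) k arr l * amt_weight m u v w X t) x)"
    by (rule sum.cong[OF refl]) (auto simp: h_def weight_comb)
  also have "\<dots> = (\<Sum>arr\<in>Arr (Suc m). \<Sum>l\<in>box (Suc m) k arr. \<Sum>t\<in>AMT m l. bw (Suc m) k arr l * amt_weight m u v w X t)"
  proof -
    define F where "F arr l t = bw (Suc m) k arr l * amt_weight m u v w X t" for arr l t
    have "(\<Sum>x\<in>SS (Suc m) k. (\<lambda>(arr, l, t). F arr l t) x) = (\<Sum>arr\<in>Arr (Suc m). \<Sum>p\<in>Sigma (box (Suc m) k arr) (AMT m). (\<lambda>(l, t). F arr l t) p)"
      unfolding SS_def diff_Suc_1
      by (rule sum.Sigma[symmetric]) (auto simp: finite_Arr finite_box finite_AMT intro!: finite_SigmaI)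
    also have "\<dots> = (\<Sum>arr\<in>Arr (Suc m). \<Sum>l\<in>box (Suc m) k arr. \<Sum>t\<in>AMT m l. F arr l t)"
      by (rule sum.cong[OF refl], rule sum.Sigma[symmetric]) (auto simp: finite_box finite_AMT)
    finally show ?thesis unfolding F_def .
  qed
  also have "\<dots> = (\<Sum>arr\<in>Arr (Suc m). \<Sum>l\<in>box (Suc m) k arr. bw (Suc m) k arr l * (\<Sum>t\<in>AMT m l. amt_weight m u v w X t))"
    by (simp add: sum_distrib_left)
  finally show ?thesis .
qed

end

lemma mono_id:
  fixes Y :: "nat \<Rightarrow> 'a::field"
  assumes Y: "\<And>i. Y i \<noteq> 0"
  shows "(\<Prod>j=1..n. Y j powi (int j + int j - 1)) * (\<Prod>q=1..n. \<Prod>p=1..<q. Y p / Y q) = (\<Prod>j=1..n. Y j ^ n)"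
proof (induction n)
  case 0 then show ?case by simp
next
  case (Suc n)
  have e1: "Y (Suc n) powi (int (Suc n) + int (Suc n) - 1) = Y (Suc n) ^ (2 * n + 1)"
  proof -
    have "int (Suc n) + int (Suc n) - 1 = int (2 * n + 1)" by simp
    then show ?thesis by (simp only: power_int_of_nat)
  qed
  have e2: "(\<Prod>p=1..<Suc n. Y p / Y (Suc n)) = (\<Prod>p=1..n. Y p) / Y (Suc n) ^ n"
    by (simp add: prod_dividef atLeastLessThanSuc_atLeastAtMost)
  have e3: "(\<Prod>j=1..n. Y j ^ Suc n) = (\<Prod>j=1..n. Y j ^ n) * (\<Prod>j=1..n. Y j)"
    by (simp add: prod.distrib[symmetric] mult.commute)
  have a: "(\<Prod>j=1..Suc n. Y j powi (int j + int j - 1)) = (\<Prod>j=1..n. Y j powi (int j + int j - 1)) * Y (Suc n) ^ (2 * n + 1)"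
    unfolding e1[symmetric] by simp
  have b: "(\<Prod>q=1..Suc n. \<Prod>p=1..<q. Y p / Y q) = (\<Prod>q=1..n. \<Prod>p=1..<q. Y p / Y q) * ((\<Prod>p=1..n. Y p) / Y (Suc n) ^ n)"
    unfolding e2[symmetric] by simp
  have "(\<Prod>j=1..Suc n. Y j powi (int j + int j - 1)) * (\<Prod>q=1..Suc n. \<Prod>p=1..<q. Y p / Y q)
      = ((\<Prod>j=1..n. Y j powi (int j + int j - 1)) * (\<Prod>q=1..n. \<Prod>p=1..<q. Y p / Y q))
        * (Y (Suc n) ^ (2 * n + 1) * ((\<Prod>p=1..n. Y p) / Y (Suc n) ^ n))"
    unfolding a b by (simp only: mult_ac)
  also have "\<dots> = (\<Prod>j=1..n. Y j ^ n) * (Y (Suc n) ^ (2 * n + 1) * ((\<Prod>p=1..n. Y p) / Y (Suc n) ^ n))"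
    unfolding Suc ..
  also have "\<dots> = (\<Prod>j=1..n. Y j ^ Suc n) * Y (Suc n) ^ Suc n"
  proof -
    have "Y (Suc n) ^ (2 * n + 1) = Y (Suc n) ^ Suc n * Y (Suc n) ^ n"
      by (simp add: power_add[symmetric] mult_2)
    then show ?thesis unfolding e3 using Y[of "Suc n"] by (simp add: field_simps)
  qed
  also have "\<dots> = (\<Prod>j=1..Suc n. Y j ^ Suc n)" by simp
  finally show ?case .
qed

context amt_ctx begin

definition V :: "nat \<Rightarrow> 'a" where "V n = (\<Prod>j=1..n. \<Prod>i=1..<j. (X j - X i))"
definition P :: "nat \<Rightarrow> 'a" where "P n = (\<Prod>i=1..n. Q (X i) (X i))"

lemma G_0: "G 0 k = 1"
  unfolding G_def g_def Ep_def Cp_def by simp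

lemma box_strict:
  assumes k: "\<And>j. 1 \<le> j \<Longrightarrow> j < Suc m \<Longrightarrow> k j < k (Suc j)" and l: "l \<in> box (Suc m) k arr"
  shows "\<And>j. 1 \<le> j \<Longrightarrow> j < m \<Longrightarrow> l j < l (Suc j)"
proof -
  fix j assume j: "1 \<le> j" "j < m"
  have a: "l j \<le> k (Suc j) - nw (arr (Suc j))" using l j unfolding box_def Ibox_def by (auto simp: PiE_iff)
  have b: "k (Suc j) + ne (arr (Suc j)) \<le> l (Suc j)" using l j unfolding box_def Ibox_def by (auto simp: PiE_iff)
  have "ne (arr (Suc j)) + nw (arr (Suc j)) \<ge> 1" unfolding ne_def nw_def by (cases "arr (Suc j)") auto
  then show "l j < l (Suc j)" using a b by simp
qed

lemma main_ind:
  "\<forall>k. (\<forall>j. 1 \<le> j \<longrightarrow> j < n \<longrightarrow> k j < k (Suc j)) \<longrightarrow> (\<Sum>t\<in>AMT n k. amt_weight n u v w X t) * V n = P n * G n k"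
proof (induction n)
  case 0
  show ?case by (simp add: AMT_0 G_0 V_def P_def amt_weight_def total_count_def)
next
  case (Suc m)
  show ?case
  proof (intro allI impI)
    fix k :: "nat \<Rightarrow> int" assume k0: "\<forall>j. 1 \<le> j \<longrightarrow> j < Suc m \<longrightarrow> k j < k (Suc j)"
    then have k: "\<And>j. 1 \<le> j \<Longrightarrow> j < Suc m \<Longrightarrow> k j < k (Suc j)" by blast
    define PiX where "PiX = (\<Prod>i=1..m. X (Suc m) - X i)"
    have VS: "V (Suc m) = V m * PiX"
      unfolding V_def PiX_def by (simp add: atLeastLessThanSuc_atLeastAtMost)
    have PS: "P (Suc m) = P m * Q (X (Suc m)) (X (Suc m))" unfolding P_def by simp
    have IH: "(\<Sum>t\<in>AMT m l. amt_weight m u v w X t) * V m = P m * G m l" if "l \<in> box (Suc m) k arr" for l arr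
      using Suc.IH box_strict[where k=k and m=m, OF k that] by blast
    have "(\<Sum>t\<in>AMT (Suc m) k. amt_weight (Suc m) u v w X t) * V (Suc m)
        = PiX * (\<Sum>arr\<in>Arr (Suc m). \<Sum>l\<in>box (Suc m) k arr. bw (Suc m) k arr l * ((\<Sum>t\<in>AMT m l. amt_weight m u v w X t) * V m))"
    proof -
      have cs: "(\<Sum>t\<in>AMT (Suc m) k. amt_weight (Suc m) u v w X t)
        = (\<Sum>arr\<in>Arr (Suc m). \<Sum>l\<in>box (Suc m) k arr. bw (Suc m) k arr l * (\<Sum>t\<in>AMT m l. amt_weight m u v w X t))"
        by (rule C_sum[where k=k and m=m, OF k])
      show ?thesis unfolding cs VS by (simp add: sum_distrib_left sum_distrib_right ac_simps)
    qed
    also have "\<dots> = PiX * (\<Sum>arr\<in>Arr (Suc m). \<Sum>l\<in>box (Suc m) k arr. bw (Suc m) k arr l * (P m * G m l))"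
      by (rule arg_cong[where f="\<lambda>z. PiX * z"], rule sum.cong[OF refl], rule sum.cong[OF refl]) (simp add: IH)
    also have "\<dots> = P m * (PiX * (\<Sum>arr\<in>Arr (Suc m). \<Sum>l\<in>box (Suc m) k arr. bw (Suc m) k arr l * G m l))"
      by (simp add: sum_distrib_left ac_simps)
    also have "PiX * (\<Sum>arr\<in>Arr (Suc m). \<Sum>l\<in>box (Suc m) k arr. bw (Suc m) k arr l * G m l) = Q (X (Suc m)) (X (Suc m)) * G (Suc m) k"
      unfolding PiX_def by (rule A1) (use k in auto)
    finally show "(\<Sum>t\<in>AMT (Suc m) k. amt_weight (Suc m) u v w X t) * V (Suc m) = P (Suc m) * G (Suc m) k"
      unfolding PS by (simp add: ac_simps)
  qed
qed

lemma PG: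
  "P n * G n (\<lambda>j. int j) = (\<Prod>i=1..n. X i ^ n) *
     (\<Sum>\<sigma> | \<sigma> permutes {1..n}. of_int (sign \<sigma>) * (\<Prod>q=1..n. \<Prod>p=1..q. (u * X (\<sigma> q) + v / X (\<sigma> p) + w)))"
proof -
  have per: "P n * g n (\<lambda>j. int j) \<sigma> = (\<Prod>i=1..n. X i ^ n) * (\<Prod>q=1..n. \<Prod>p=1..q. (u * X (\<sigma> q) + v / X (\<sigma> p) + w))"
    if p: "\<sigma> permutes {1..n}" for \<sigma>
  proof -
    define Y where "Y j = X (\<sigma> j)" for j
    define R where "R p q = u * Y q + v / Y p + w" for p q
    have Y0: "\<And>i. Y i \<noteq> 0" unfolding Y_def by simp
    have QR: "Q (Y p) (Y q) = (Y p / Y q) * R p q" for p q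
      unfolding Q_def R_def using Y0[of p] Y0[of q] by (simp add: field_simps)
    have Pn: "P n = (\<Prod>q=1..n. R q q)"
    proof -
      have "P n = (\<Prod>q=1..n. Q (Y q) (Y q))"
        unfolding P_def Y_def using prod.permute[OF p, of "\<lambda>i. Q (X i) (X i)"] by (simp add: comp_def)
      also have "\<dots> = (\<Prod>q=1..n. R q q)" using QR Y0 by (intro prod.cong) auto
      finally show ?thesis .
    qed
    have Xn: "(\<Prod>i=1..n. X i ^ n) = (\<Prod>j=1..n. Y j ^ n)"
      unfolding Y_def using prod.permute[OF p, of "\<lambda>i. X i ^ n"] by (simp add: comp_def)
    have Cpe: "Cp n \<sigma> = (\<Prod>q=1..n. \<Prod>p=1..<q. Y p / Y q) * (\<Prod>q=1..n. \<Prod>p=1..<q. R p q)"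
      unfolding Cp_def Y_def[symmetric] QR by (simp only: prod.distrib)
    have Ee: "Ep n (\<lambda>j. int j) \<sigma> = (\<Prod>j=1..n. Y j powi (int j + int j - 1))"
      unfolding Ep_def Y_def ..
    have Rs: "(\<Prod>q=1..n. \<Prod>p=1..q. R p q) = (\<Prod>q=1..n. R q q) * (\<Prod>q=1..n. \<Prod>p=1..<q. R p q)"
    proof -
      have "(\<Prod>p=1..q. R p q) = R q q * (\<Prod>p=1..<q. R p q)" if "q \<in> {1..n}" for q
        using that by (simp add: atLeastLessThanSuc_atLeastAtMost[symmetric] prod.atLeastLessThan_Suc)
      then show ?thesis by (simp add: prod.distrib)
    qed
    have "P n * g n (\<lambda>j. int j) \<sigma> = ((\<Prod>j=1..n. Y j powi (int j + int j - 1)) * (\<Prod>q=1..n. \<Prod>p=1..<q. Y p / Y q))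
         * ((\<Prod>q=1..n. R q q) * (\<Prod>q=1..n. \<Prod>p=1..<q. R p q))"
      unfolding g_def Pn Cpe Ee by (simp add: ac_simps)
    also have "\<dots> = (\<Prod>i=1..n. X i ^ n) * (\<Prod>q=1..n. \<Prod>p=1..q. R p q)"
      unfolding mono_id[OF Y0] Rs Xn ..
    finally show ?thesis unfolding R_def Y_def .
  qed
  show ?thesis unfolding G_def by (simp add: sum_distrib_left per ac_simps)
qed

lemma V_nz:
  assumes inj: "inj_on X {1..n}"
  shows "V n \<noteq> 0"
proof -
  have "X j - X i \<noteq> 0" if "j \<in> {1..n}" "i \<in> {1..<j}" for i j
    using inj_onD[OF inj, of j i] that by auto
  then show ?thesis unfolding V_def by (simp add: prod_zero_iff)
qed

lemma gf_sumform:
  assumes inj: "inj_on X {1..n}"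
  shows "amt_gf n u v w X = (\<Prod>i=1..n. X i ^ n) *
     (\<Sum>\<sigma> | \<sigma> permutes {1..n}. of_int (sign \<sigma>) * (\<Prod>q=1..n. \<Prod>p=1..q. (u * X (\<sigma> q) + v / X (\<sigma> p) + w)))
     / (\<Prod>j=1..n. \<Prod>i=1..<j. (X j - X i))"
proof -
  have "amt_gf n u v w X * V n = P n * G n (\<lambda>j. int j)"
    using main_ind[of n] unfolding amt_gf_def arrowed_MT_AMT by simp
  then have "amt_gf n u v w X = P n * G n (\<lambda>j. int j) / V n" using V_nz[OF inj] by (simp add: field_simps)
  then show ?thesis unfolding PG V_def .
qed

end

theorem mainTheorem15:
  fixes n :: nat and u v w :: "'a::field" and X :: "nat \<Rightarrow> 'a"
  assumes "n \<ge> 1"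
    and "\<And>i. i \<in> {1..n} \<Longrightarrow> X i \<noteq> 0"
    and "inj_on X {1..n}"
  shows "amt_gf n u v w X =
           (\<Prod>i=1..n. X i ^ n) *
           det (mat n n (\<lambda>(i, j). (u * X (i+1) + w) ^ (j+1) - (- v / X (i+1)) ^ (j+1)))
           / (\<Prod>j=1..n. \<Prod>i=1..<j. (X j - X i))
       \<and> (\<Prod>i=1..n. X i ^ n) *
           det (mat n n (\<lambda>(i, j). (u * X (i+1) + w) ^ (j+1) - (- v / X (i+1)) ^ (j+1)))
           / (\<Prod>j=1..n. \<Prod>i=1..<j. (X j - X i))
         = (\<Prod>i=1..n. X i ^ n) *
           (\<Sum>\<sigma> | \<sigma> permutes {1..n}. of_int (sign \<sigma>) *
              (\<Prod>q=1..n. \<Prod>p=1..q. (u * X (\<sigma> q) + v / X (\<sigma> p) + w)))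
           / (\<Prod>j=1..n. \<Prod>i=1..<j. (X j - X i))"
proof -
  define X' where "X' i = (if i \<in> {1..n} then X i else 1)" for i
  have X'nz: "X' i \<noteq> 0" for i unfolding X'_def using assms(2) by auto
  interpret amt_ctx u v w X' by unfold_locales (rule X'nz)
  have XX: "i \<in> {1..n} \<Longrightarrow> X' i = X i" for i unfolding X'_def by simp
  have ic: "inj_on X' {1..n} = inj_on X {1..n}" by (rule inj_on_cong) (simp add: XX)
  have inj': "inj_on X' {1..n}" using assms(3) ic by simp
  define S where "S = (\<Sum>\<sigma> | \<sigma> permutes {1..n}. of_int (sign \<sigma>) *
              (\<Prod>q=1..n. \<Prod>p=1..q. (u * X (\<sigma> q) + v / X (\<sigma> p) + w)))"
  define Dt where "Dt = det (mat n n (\<lambda>(i, j). (u * X (i+1) + w) ^ (j+1) - (- v / X (i+1)) ^ (j+1)))"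
  define Vd where "Vd = (\<Prod>j=1..n. \<Prod>i=1..<j. (X j - X i))"
  define Pw where "Pw = (\<Prod>i=1..n. X i ^ n)"
  have SD: "S = Dt"
  proof -
    define a where "a i = u * X i + w" for i
    define b where "b i = v / X i" for i
    have "S = (\<Sum>\<sigma> | \<sigma> permutes {1..n}. of_int (sign \<sigma>) * (\<Prod>q=1..n. \<Prod>p=1..q. a (\<sigma> q) + b (\<sigma> p)))"
      unfolding S_def a_def b_def by (simp add: ac_simps)
    also have "\<dots> = det (mat n n (\<lambda>(i, j). phi a b (j+1) (i+1)))" by (rule sumform_det)
    also have "mat n n (\<lambda>(i, j). phi a b (j+1) (i+1)) = mat n n (\<lambda>(i, j). (u * X (i+1) + w) ^ (j+1) - (- v / X (i+1)) ^ (j+1))"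
      unfolding phi_def a_def b_def by simp
    finally show ?thesis unfolding Dt_def .
  qed
  have gfX: "amt_gf n u v w X = amt_gf n u v w X'"
    unfolding amt_gf_def
  proof (rule sum.cong[OF refl])
    fix t :: "(nat \<Rightarrow> nat \<Rightarrow> int) \<times> (nat \<Rightarrow> nat \<Rightarrow> arrow)"
    obtain m d where t: "t = (m, d)" by (cases t)
    show "amt_weight n u v w X t = amt_weight n u v w X' t"
    proof -
      have pe: "(\<Prod>i=1..n. X i powi e i) = (\<Prod>i=1..n. X' i powi e i)" for e :: "nat \<Rightarrow> int"
        by (rule prod.cong[OF refl]) (simp add: XX)
      show ?thesis unfolding t amt_weight_def prod.case pe ..
    qed
  qed
  have main: "amt_gf n u v w X' = (\<Prod>i=1..n. X' i ^ n) *
     (\<Sum>\<sigma> | \<sigma> permutes {1..n}. of_int (sign \<sigma>) * (\<Prod>q=1..n. \<Prod>p=1..q. (u * X' (\<sigma> q) + v / X' (\<sigma> p) + w)))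
     / (\<Prod>j=1..n. \<Prod>i=1..<j. (X' j - X' i))"
    by (rule gf_sumform[OF inj'])
  have e1: "(\<Prod>i=1..n. X' i ^ n) = Pw" unfolding Pw_def by (rule prod.cong[OF refl]) (simp add: XX)
  have e2: "(\<Prod>j=1..n. \<Prod>i=1..<j. (X' j - X' i)) = Vd" unfolding Vd_def
    by (rule prod.cong[OF refl], rule prod.cong[OF refl]) (simp add: XX)
  have e3: "(\<Sum>\<sigma> | \<sigma> permutes {1..n}. of_int (sign \<sigma>) * (\<Prod>q=1..n. \<Prod>p=1..q. (u * X' (\<sigma> q) + v / X' (\<sigma> p) + w))) = S"
    unfolding S_def
  proof (rule sum.cong[OF refl])
    fix \<sigma> assume "\<sigma> \<in> {\<sigma>. \<sigma> permutes {1..n}}"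
    then have p: "\<sigma> permutes {1..n}" by simp
    have XS: "\<And>q. q \<in> {1..n} \<Longrightarrow> X' (\<sigma> q) = X (\<sigma> q)" using XX permutes_in_image[OF p] by blast
    show "of_int (sign \<sigma>) * (\<Prod>q=1..n. \<Prod>p=1..q. (u * X' (\<sigma> q) + v / X' (\<sigma> p) + w))
        = of_int (sign \<sigma>) * (\<Prod>q=1..n. \<Prod>p=1..q. (u * X (\<sigma> q) + v / X (\<sigma> p) + w))"
      by (rule arg_cong[where f="\<lambda>z. of_int (sign \<sigma>) * z"], rule prod.cong[OF refl], rule prod.cong[OF refl]) (auto simp: XS)
  qed
  have gf: "amt_gf n u v w X = Pw * S / Vd" using gfX main e1 e2 e3 by simp
  show ?thesis unfolding Pw_def[symmetric] Vd_def[symmetric] Dt_def[symmetric] S_def[symmetric]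
    using gf SD by simp
qed


end
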